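(* Let $\mathscr{F}$ be a family of languages closed under union, rational transduction, product and Kleene closure. Let $S$ be a finitely generated completely zero-simple semigroup. Then the following are equivalent: (1) $S$ has loop problem in $\mathscr{F}$; (2) some non-zero maximal subgroup of $S$ has loop problem in $\mathscr{F}$; (3) every non-zero maximal subgroup of $S$ has loop problem in $\mathscr{F}$.
   Context: A semigroup $S$ with zero $0$ is completely zero-simple if $S^2 \neq \{0\}$, its only ideals are $\{0\}$ and $S$, and it contains a primitive idempotent (a nonzero idempotent $e$ such that the only nonzero idempotent $f$ with $ef = fe = f$ is $e$). A non-zero maximal subgroup is a maximal subgroup not equal to $\{0\}$. For a semigroup $S$, $S^1$ denotes the monoid obtained by adjoining a new identity $1$ (even if $S$ already has one). A choice of generators for $S$ is a surjective morphism $\sigma : X^+ \to S$ from a free semigroup, finite if $X$ is finite; it extends uniquely to $\sigma^1 : X^* \to S^1$. Let $\overline{X} = \{\overline{x} : x \in X\}$ be a set of formal inverses, $\hat{X} = X \cup \overline{X}$. The loop automaton of $S$ with respect to $\sigma$ is the directed labelled graph with vertex set $S^1$, having for each $a \in S^1$ and $x \in X$ an edge from $a$ to $a(x\sigma)$ labelled $x$ and an edge from $a(x\sigma)$ to $a$ labelled $\overline{x}$. The loop problem $L_\sigma(S) \subseteq \hat{X}^*$ is the set of words labelling paths from $1$ to $1$ in this graph (including the empty word). A finitely generated semigroup (in particular a group, viewed as a semigroup) "has loop problem in $\mathscr{F}$" if $L_\sigma \in \mathscr{F}$ for every finite choice of generators $\sigma$. A rational transduction is a relation between free monoids realised by a finite-state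 transducer. *)

theory Defs
  imports Main
begin

definition semigroup_on :: "'a set \<Rightarrow> ('a \<Rightarrow> 'a \<Rightarrow> 'a) \<Rightarrow> bool" where
  "semigroup_on S f \<longleftrightarrow>
     (\<forall>x\<in>S. \<forall>y\<in>S. f x y \<in> S) \<and>
     (\<forall>x\<in>S. \<forall>y\<in>S. \<forall>w\<in>S. f (f x y) w = f x (f y w))"

definition is_zero :: "'a set \<Rightarrow> ('a \<Rightarrow> 'a \<Rightarrow> 'a) \<Rightarrow> 'a \<Rightarrow> bool" where
  "is_zero S f z \<longleftrightarrow> z \<in> S \<and> (\<forall>x\<in>S. f z x = z \<and> f x z = z)"

definition sg_ideal :: "'a set \<Rightarrow> ('a \<Rightarrow> 'a \<Rightarrow> 'a) \<Rightarrow> 'a set \<Rightarrow> bool" where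
  "sg_ideal S f I \<longleftrightarrow> I \<subseteq> S \<and> I \<noteq> {} \<and> (\<forall>s\<in>S. \<forall>i\<in>I. f s i \<in> I \<and> f i s \<in> I)"

definition primitive_idempotent :: "'a set \<Rightarrow> ('a \<Rightarrow> 'a \<Rightarrow> 'a) \<Rightarrow> 'a \<Rightarrow> 'a \<Rightarrow> bool" where
  "primitive_idempotent S f z e \<longleftrightarrow> e \<in> S \<and> e \<noteq> z \<and> f e e = e \<and>
     (\<forall>g\<in>S. g \<noteq> z \<and> f g g = g \<and> f e g = g \<and> f g e = g \<longrightarrow> g = e)"

definition completely_zero_simple :: "'a set \<Rightarrow> ('a \<Rightarrow> 'a \<Rightarrow> 'a) \<Rightarrow> 'a \<Rightarrow> bool" where
  "completely_zero_simple S f z \<longleftrightarrow>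
     semigroup_on S f \<and> is_zero S f z \<and>
     {f x y | x y. x \<in> S \<and> y \<in> S} \<noteq> {z} \<and>
     (\<forall>I. sg_ideal S f I \<longrightarrow> I = {z} \<or> I = S) \<and>
     (\<exists>e. primitive_idempotent S f z e)"

definition sg_subgroup :: "'a set \<Rightarrow> ('a \<Rightarrow> 'a \<Rightarrow> 'a) \<Rightarrow> 'a set \<Rightarrow> bool" where
  "sg_subgroup S f H \<longleftrightarrow> H \<subseteq> S \<and> (\<forall>x\<in>H. \<forall>y\<in>H. f x y \<in> H) \<and>
     (\<exists>e\<in>H. (\<forall>h\<in>H. f e h = h \<and> f h e = h) \<and> (\<forall>h\<in>H. \<exists>h'\<in>H. f h h' = e \<and> f h' h = e))"

definition max_subgroup :: "'a set \<Rightarrow> ('a \<Rightarrow> 'a \<Rightarrow> 'a) \<Rightarrow> 'a set \<Rightarrow> bool" where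
  "max_subgroup S f H \<longleftrightarrow> sg_subgroup S f H \<and> (\<forall>K. sg_subgroup S f K \<and> H \<subseteq> K \<longrightarrow> K = H)"

definition nonzero_max_subgroup :: "'a set \<Rightarrow> ('a \<Rightarrow> 'a \<Rightarrow> 'a) \<Rightarrow> 'a \<Rightarrow> 'a set \<Rightarrow> bool" where
  "nonzero_max_subgroup S f z H \<longleftrightarrow> max_subgroup S f H \<and> H \<noteq> {z}"

fun word_val :: "('a \<Rightarrow> 'a \<Rightarrow> 'a) \<Rightarrow> (nat \<Rightarrow> 'a) \<Rightarrow> nat list \<Rightarrow> 'a" where
  "word_val f \<sigma> [] = undefined"
| "word_val f \<sigma> (x # xs) = foldl (\<lambda>a y. f a (\<sigma> y)) (\<sigma> x) xs"

definition finite_generators :: "'a set \<Rightarrow> ('a \<Rightarrow> 'a \<Rightarrow> 'a) \<Rightarrow> nat set \<Rightarrow> (nat \<Rightarrow> 'a) \<Rightarrow> bool" where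
  "finite_generators S f X \<sigma> \<longleftrightarrow> finite X \<and> (\<forall>x\<in>X. \<sigma> x \<in> S) \<and>
     (\<forall>s\<in>S. \<exists>w. w \<noteq> [] \<and> set w \<subseteq> X \<and> word_val f \<sigma> w = s)"

definition fin_generated :: "'a set \<Rightarrow> ('a \<Rightarrow> 'a \<Rightarrow> 'a) \<Rightarrow> bool" where
  "fin_generated S f \<longleftrightarrow> (\<exists>X \<sigma>. finite_generators S f X \<sigma>)"

text \<open>S^1 is modelled as 'a option: None is the adjoined identity 1, Some s is s \<in> S.
  Letters of X-hat: Inl x is x, Inr x is the formal inverse x-bar.\<close>
fun act1 :: "('a \<Rightarrow> 'a \<Rightarrow> 'a) \<Rightarrow> 'a option \<Rightarrow> 'a \<Rightarrow> 'a option" where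
  "act1 f None s = Some s"
| "act1 f (Some a) s = Some (f a s)"

definition vertices1 :: "'a set \<Rightarrow> 'a option set" where
  "vertices1 S = insert None (Some ` S)"

inductive loop_path :: "'a set \<Rightarrow> ('a \<Rightarrow> 'a \<Rightarrow> 'a) \<Rightarrow> nat set \<Rightarrow> (nat \<Rightarrow> 'a)
    \<Rightarrow> 'a option \<Rightarrow> (nat + nat) list \<Rightarrow> 'a option \<Rightarrow> bool"
  for S f X \<sigma> where
  lp_nil: "p \<in> vertices1 S \<Longrightarrow> loop_path S f X \<sigma> p [] p"
| lp_fwd: "x \<in> X \<Longrightarrow> p \<in> vertices1 S \<Longrightarrow> loop_path S f X \<sigma> (act1 f p (\<sigma> x)) w q
            \<Longrightarrow> loop_path S f X \<sigma> p (Inl x # w) q"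
| lp_bwd: "x \<in> X \<Longrightarrow> p' \<in> vertices1 S \<Longrightarrow> act1 f p' (\<sigma> x) = p \<Longrightarrow> loop_path S f X \<sigma> p' w q
            \<Longrightarrow> loop_path S f X \<sigma> p (Inr x # w) q"

definition loop_problem :: "'a set \<Rightarrow> ('a \<Rightarrow> 'a \<Rightarrow> 'a) \<Rightarrow> nat set \<Rightarrow> (nat \<Rightarrow> 'a) \<Rightarrow> (nat + nat) list set" where
  "loop_problem S f X \<sigma> = {w. loop_path S f X \<sigma> None w None}"

fun enc_letter :: "nat + nat \<Rightarrow> nat" where
  "enc_letter (Inl x) = 2 * x"
| "enc_letter (Inr x) = 2 * x + 1"

definition has_loop_problem_in :: "nat list set set \<Rightarrow> 'a set \<Rightarrow> ('a \<Rightarrow> 'a \<Rightarrow> 'a) \<Rightarrow> bool" where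
  "has_loop_problem_in F S f \<longleftrightarrow> fin_generated S f \<and>
     (\<forall>X \<sigma>. finite_generators S f X \<sigma> \<longrightarrow> map enc_letter ` loop_problem S f X \<sigma> \<in> F)"

definition language_family :: "nat list set set \<Rightarrow> bool" where
  "language_family F \<longleftrightarrow> (\<forall>L\<in>F. \<exists>\<Sigma>. finite \<Sigma> \<and> L \<subseteq> lists \<Sigma>)"

definition closed_union :: "nat list set set \<Rightarrow> bool" where
  "closed_union F \<longleftrightarrow> (\<forall>L1\<in>F. \<forall>L2\<in>F. L1 \<union> L2 \<in> F)"

definition lang_product :: "'c list set \<Rightarrow> 'c list set \<Rightarrow> 'c list set" where
  "lang_product L1 L2 = {u @ v | u v. u \<in> L1 \<and> v \<in> L2}"

definition closed_product :: "nat list set set \<Rightarrow> bool" where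
  "closed_product F \<longleftrightarrow> (\<forall>L1\<in>F. \<forall>L2\<in>F. lang_product L1 L2 \<in> F)"

definition kleene_star :: "'c list set \<Rightarrow> 'c list set" where
  "kleene_star L = {concat ws | ws. set ws \<subseteq> L}"

definition closed_star :: "nat list set set \<Rightarrow> bool" where
  "closed_star F \<longleftrightarrow> (\<forall>L\<in>F. kleene_star L \<in> F)"

text \<open>Finite transducers with word-labelled transitions (p, input, output, p').\<close>
inductive trans_path :: "(nat \<times> nat list \<times> nat list \<times> nat) set \<Rightarrow> nat \<Rightarrow> nat list \<Rightarrow> nat list \<Rightarrow> nat \<Rightarrow> bool"
  for \<Delta> where
  tp_nil: "trans_path \<Delta> p [] [] p"
| tp_step: "(p, a, b, p') \<in> \<Delta> \<Longrightarrow> trans_path \<Delta> p' u v q \<Longrightarrow> trans_path \<Delta> p (a @ u) (b @ v) q"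

definition rational_transduction :: "(nat \<times> nat list \<times> nat list \<times> nat) set \<Rightarrow> nat \<Rightarrow> nat set
    \<Rightarrow> (nat list \<times> nat list) set" where
  "rational_transduction \<Delta> q0 Fin = {(u, v). \<exists>q\<in>Fin. trans_path \<Delta> q0 u v q}"

definition closed_rat_trans :: "nat list set set \<Rightarrow> bool" where
  "closed_rat_trans F \<longleftrightarrow> (\<forall>\<Delta> q0 Fin. finite \<Delta> \<longrightarrow>
     (\<forall>L\<in>F. {v. \<exists>u\<in>L. (u, v) \<in> rational_transduction \<Delta> q0 Fin} \<in> F))"

end

theory Submission
  imports Defs
begin

inductive run :: "('s \<Rightarrow> 'l \<Rightarrow> 's \<Rightarrow> bool) \<Rightarrow> 's \<Rightarrow> 'l list \<Rightarrow> 's \<Rightarrow> bool" for R where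
  run_nil: "run R s [] s"
| run_cons: "R s l s' \<Longrightarrow> run R s' w t \<Longrightarrow> run R s (l # w) t"

lemma run_Nil_iff[simp]: "run R s [] t \<longleftrightarrow> s = t"
  by (auto elim: run.cases intro: run.intros)

lemma run_Cons_iff[simp]: "run R s (l # w) t \<longleftrightarrow> (\<exists>s'. R s l s' \<and> run R s' w t)"
  by (auto elim: run.cases intro: run.intros)

lemma run_append_iff: "run R s (u @ v) t \<longleftrightarrow> (\<exists>m. run R s u m \<and> run R m v t)"
  by (induction u arbitrary: s) auto

lemma run_sim:
  assumes "run R b w c" "P b s"
    and "\<And>b l b' s. R b l b' \<Longrightarrow> P b s \<Longrightarrow> \<exists>s'. R' s l s' \<and> P b' s'"
  shows "\<exists>s'. run R' s w s' \<and> P c s'"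
  using assms(1,2)
proof (induction arbitrary: s rule: run.induct)
  case (run_nil b) then show ?case by auto
next
  case (run_cons b l b' w c)
  from assms(3)[OF run_cons(1,4)] obtain s' where "R' s l s'" "P b' s'" by blast
  with run_cons(3) show ?case proof -
    from run_cons(3)[OF \<open>P b' s'\<close>] obtain t where "run R' s' w t" "P c t" by blast
    with \<open>R' s l s'\<close> show ?thesis by (auto intro: run.intros)
  qed
qed

lemma run_bsim:
  assumes "run R' s w s'" "P c s'"
    and "\<And>s l s' b'. R' s l s' \<Longrightarrow> P b' s' \<Longrightarrow> \<exists>b. R b l b' \<and> P b s"
  shows "\<exists>b. run R b w c \<and> P b s"
  using assms(1,2)
proof (induction rule: run.induct)
  case (run_nil s) then show ?case by auto
next
  case (run_cons s l s1 w s')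
  from run_cons(3,4) obtain b1 where "run R b1 w c" "P b1 s1" by blast
  with assms(3)[OF run_cons(1)] obtain b where "R b l b1" "P b s" by blast
  with \<open>run R b1 w c\<close> show ?case by auto
qed

inductive tpq :: "('q \<times> 'c list \<times> 'c list \<times> 'q) set \<Rightarrow> 'q \<Rightarrow> 'c list \<Rightarrow> 'c list \<Rightarrow> 'q \<Rightarrow> bool"
  for D where
  tpq_nil: "tpq D p [] [] p"
| tpq_step: "(p, a, b, p') \<in> D \<Longrightarrow> tpq D p' u v q \<Longrightarrow> tpq D p (a @ u) (b @ v) q"

lemma tpq_to_nat:
  assumes "finite D" and "L \<in> F" and "closed_rat_trans F"
  shows "{v. \<exists>u\<in>L. tpq D q0 u v qf} \<in> F"
proof -
  define A where "A = insert q0 (insert qf ((\<lambda>(p,a,b,p'). p) ` D \<union> (\<lambda>(p,a,b,p'). p') ` D))"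
  have fA: "finite A" using assms(1) unfolding A_def by auto
  obtain \<phi> :: "_ \<Rightarrow> nat" where inj: "inj_on \<phi> A"
    using fA by (metis finite_imp_inj_to_nat_seg)
  define D' where "D' = (\<lambda>(p,a,b,p'). (\<phi> p, a, b, \<phi> p')) ` D"
  have fD': "finite D'" using assms(1) unfolding D'_def by auto
  have fwd: "trans_path D' (\<phi> p) u v (\<phi> q)" if "tpq D p u v q" for p u v q
    using that
  proof (induction rule: tpq.induct)
    case (tpq_nil p) then show ?case by (rule tp_nil)
  next
    case (tpq_step p a b p' u v q)
    then have "(\<phi> p, a, b, \<phi> p') \<in> D'" unfolding D'_def by force
    then show ?case using tpq_step(3) by (rule tp_step)
  qed
  have bwd: "\<exists>q. n = \<phi> q \<and> q \<in> A \<and> tpq D p u v q" if "trans_path D' m u v n" "m = \<phi> p" "p \<in> A" for m p u v n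
    using that
  proof (induction arbitrary: p rule: trans_path.induct)
    case (tp_nil p0) then show ?case by (auto intro: tpq_nil)
  next
    case (tp_step m0 a b m1 u v n)
    from tp_step(1) obtain p1 p2 where P: "(p1, a, b, p2) \<in> D" "m0 = \<phi> p1" "m1 = \<phi> p2"
      unfolding D'_def by auto
    have "p1 \<in> A" "p2 \<in> A" using P(1) unfolding A_def by force+
    with P tp_step(4,5) inj have "p1 = p" by (auto dest: inj_onD)
    from tp_step(3)[OF P(3) \<open>p2 \<in> A\<close>] obtain q where "n = \<phi> q" "q \<in> A" "tpq D p2 u v q" by blast
    with P(1) \<open>p1 = p\<close> show ?case by (auto intro: tpq_step)
  qed
  have eq: "{v. \<exists>u\<in>L. tpq D q0 u v qf} = {v. \<exists>u\<in>L. (u, v) \<in> rational_transduction D' (\<phi> q0) {\<phi> qf}}"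
  proof (rule Collect_cong, rule bex_cong[OF refl])
    fix v u
    show "tpq D q0 u v qf \<longleftrightarrow> (u, v) \<in> rational_transduction D' (\<phi> q0) {\<phi> qf}"
    proof
      assume "tpq D q0 u v qf" then show "(u, v) \<in> rational_transduction D' (\<phi> q0) {\<phi> qf}"
        unfolding rational_transduction_def using fwd by auto
    next
      assume "(u, v) \<in> rational_transduction D' (\<phi> q0) {\<phi> qf}"
      then have "trans_path D' (\<phi> q0) u v (\<phi> qf)" unfolding rational_transduction_def by auto
      moreover have "q0 \<in> A" "qf \<in> A" unfolding A_def by auto
      ultimately obtain q where "\<phi> qf = \<phi> q" "q \<in> A" "tpq D q0 u v q"
        using bwd by blast
      with \<open>qf \<in> A\<close> show "tpq D q0 u v qf" using inj by (auto dest: inj_onD)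
    qed
  qed
  show ?thesis unfolding eq using assms(2,3) fD' unfolding closed_rat_trans_def by blast
qed

lemma G1:
  fixes R :: "'q \<Rightarrow> ('c \<times> 'c) \<Rightarrow> 'q \<Rightarrow> bool" and h :: "'c \<Rightarrow> nat"
  assumes fin: "finite {(p,a,b,p'). R p (a,b) p'}" and "L \<in> F" and "closed_rat_trans F"
  shows "{map h (map snd ls) | ls. run R q0 ls qf \<and> map h (map fst ls) \<in> L} \<in> F"
proof -
  define D where "D = (\<lambda>(p,a,b,p'). (p,[h a],[h b],p')) ` {(p,a,b,p'). R p (a,b) p'}"
  have fD: "finite D" using fin unfolding D_def by auto
  have 1: "tpq D p (map h (map fst ls)) (map h (map snd ls)) q" if "run R p ls q" for p ls q
    using that
  proof (induction rule: run.induct)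
    case (run_nil s) then show ?case using tpq_nil by fastforce
  next
    case (run_cons s l s' w t)
    obtain a b where l: "l = (a,b)" by fastforce
    have "(s, [h a], [h b], s') \<in> D" unfolding D_def using run_cons(1) l by force
    from tpq_step[OF this run_cons(3)] show ?case using l by simp
  qed
  have 2: "\<exists>ls. run R p ls q \<and> u = map h (map fst ls) \<and> v = map h (map snd ls)" if "tpq D p u v q" for p u v q
    using that
  proof (induction rule: tpq.induct)
    case (tpq_nil p) then show ?case by (intro exI[of _ "[]"]) auto
  next
    case (tpq_step p a b p' u v q)
    from tpq_step(1) obtain a0 b0 where ab: "a = [h a0]" "b = [h b0]" "R p (a0,b0) p'"
      unfolding D_def by auto
    from tpq_step(3) obtain ls where "run R p' ls q" "u = map h (map fst ls)" "v = map h (map snd ls)" by blast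
    then show ?case using ab by (intro exI[of _ "(a0,b0) # ls"]) auto
  qed
  have eq: "{map h (map snd ls) | ls. run R q0 ls qf \<and> map h (map fst ls) \<in> L} = {v. \<exists>u\<in>L. tpq D q0 u v qf}"
    using 1 2 by blast
  show ?thesis unfolding eq by (rule tpq_to_nat[OF fD assms(2,3)])
qed

lemma G2:
  fixes R :: "'q \<Rightarrow> 'c \<Rightarrow> 'q \<Rightarrow> bool" and h :: "'c \<Rightarrow> nat"
  assumes fin: "finite {(p,a,p'). R p a p'}" and "L \<in> F" and "[] \<in> L" and "closed_rat_trans F"
  shows "{map h w | w. run R q0 w qf} \<in> F"
proof -
  define D where "D = (\<lambda>(p,a,p'). (p,[]::nat list,[h a],p')) ` {(p,a,p'). R p a p'}"
  have fD: "finite D" using fin unfolding D_def by auto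
  have 1: "tpq D p [] (map h w) q" if "run R p w q" for p w q
    using that
  proof (induction rule: run.induct)
    case (run_nil s) then show ?case using tpq_nil by fastforce
  next
    case (run_cons s l s' w t)
    have "(s, [], [h l], s') \<in> D" unfolding D_def using run_cons(1) by force
    from tpq_step[OF this run_cons(3)] show ?case by simp
  qed
  have 2: "\<exists>w. run R p w q \<and> u = [] \<and> v = map h w" if "tpq D p u v q" for p u v q
    using that
  proof (induction rule: tpq.induct)
    case (tpq_nil p) then show ?case by (intro exI[of _ "[]"]) auto
  next
    case (tpq_step p a b p' u v q)
    from tpq_step(1) obtain a0 where ab: "a = []" "b = [h a0]" "R p a0 p'"
      unfolding D_def by auto
    from tpq_step(3) obtain w where "run R p' w q" "u = []" "v = map h w" by blast
    then show ?case using ab by (intro exI[of _ "a0 # w"]) auto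
  qed
  have eq: "{map h w | w. run R q0 w qf} = {v. \<exists>u\<in>L. tpq D q0 u v qf}"
    using 1 2 assms(3) by blast
  show ?thesis unfolding eq by (rule tpq_to_nat[OF fD assms(2,4)])
qed

lemma map_kleene_star: "map h ` kleene_star E = kleene_star (map h ` E)"
proof
  show "map h ` kleene_star E \<subseteq> kleene_star (map h ` E)"
  proof
    fix v assume "v \<in> map h ` kleene_star E"
    then obtain ws where "set ws \<subseteq> E" "v = map h (concat ws)" unfolding kleene_star_def by auto
    then show "v \<in> kleene_star (map h ` E)" unfolding kleene_star_def
      by (intro CollectI exI[of _ "map (map h) ws"]) (auto simp: map_concat)
  qed
next
  show "kleene_star (map h ` E) \<subseteq> map h ` kleene_star E"
  proof
    fix v assume "v \<in> kleene_star (map h ` E)"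
    then obtain ws where ws: "set ws \<subseteq> map h ` E" "v = concat ws" unfolding kleene_star_def by auto
    have "\<exists>us. set us \<subseteq> E \<and> ws = map (map h) us" using ws(1)
    proof (induction ws)
      case Nil then show ?case by auto
    next
      case (Cons w ws)
      then obtain us u where "set us \<subseteq> E" "ws = map (map h) us" "u \<in> E" "w = map h u" by auto
      then show ?case by (intro exI[of _ "u # us"]) auto
    qed
    then obtain us where "set us \<subseteq> E" "ws = map (map h) us" by blast
    then show "v \<in> map h ` kleene_star E" unfolding kleene_star_def using ws
      by (intro image_eqI[of _ _ "concat us"]) (auto simp: map_concat)
  qed
qed

lemma enc_eq: "enc_letter a = enc_letter b \<Longrightarrow> a = b"
  by (cases a; cases b) (simp_all, presburger+)

lemma inj_enc: "inj enc_letter"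
  by (rule injI) (rule enc_eq)

lemma inj_map_enc: "inj (map enc_letter)"
  using inj_enc by (simp add: inj_mapI)

fun prodl :: "('a \<Rightarrow> 'a \<Rightarrow> 'a) \<Rightarrow> 'a list \<Rightarrow> 'a" where
  "prodl f [] = undefined"
| "prodl f (x # xs) = foldl f x xs"

lemma foldl_map_gen: "foldl (\<lambda>a y. f a (\<sigma> y)) b l = foldl f b (map \<sigma> l)"
  by (induction l arbitrary: b) auto

lemma wv_prodl: "word_val f \<sigma> w = prodl f (map \<sigma> w)"
  by (cases w) (auto simp: foldl_map_gen)

lemma prodl_snoc: "l \<noteq> [] \<Longrightarrow> prodl f (l @ [b]) = f (prodl f l) b"
  by (cases l) auto

lemma prodl_single[simp]: "prodl f [b] = b" by simp

definition idx :: "'a list \<Rightarrow> 'a \<Rightarrow> nat" where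
  "idx gs a = (SOME i. i < length gs \<and> gs ! i = a)"

lemma idx: assumes "a \<in> set gs" shows "idx gs a < length gs" "gs ! idx gs a = a"
proof -
  have "\<exists>i. i < length gs \<and> gs ! i = a" using assms by (simp add: in_set_conv_nth)
  then have "idx gs a < length gs \<and> gs ! idx gs a = a" unfolding idx_def by (rule someI_ex)
  then show "idx gs a < length gs" "gs ! idx gs a = a" by auto
qed

lemma fg_from_list:
  assumes AG: "set gs \<subseteq> G" and gen: "\<forall>h\<in>G. \<exists>l. l \<noteq> [] \<and> set l \<subseteq> set gs \<and> prodl f l = h"
  shows "finite_generators G f {..<length gs} (\<lambda>i. gs ! i)"
  unfolding finite_generators_def
proof (intro conjI ballI)
  show "finite {..<length gs}" by simp
  fix x assume "x \<in> {..<length gs}" then show "gs ! x \<in> G" using AG by auto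
next
  fix s assume "s \<in> G"
  then obtain l where l: "l \<noteq> []" "set l \<subseteq> set gs" "prodl f l = s" using gen by blast
  have "map (\<lambda>i. gs ! i) (map (idx gs) l) = l" using l(2) idx by (induction l) auto
  then have "word_val f (\<lambda>i. gs ! i) (map (idx gs) l) = s" using l(3) by (simp add: wv_prodl)
  moreover have "set (map (idx gs) l) \<subseteq> {..<length gs}" using l(2) idx(1) by fastforce
  ultimately show "\<exists>w. w \<noteq> [] \<and> set w \<subseteq> {..<length gs} \<and> word_val f (\<lambda>i. gs ! i) w = s"
    using l(1) by (intro exI[of _ "map (idx gs) l"]) auto
qed

datatype 'x st = St | Fi | Q 'x

locale czs =
  fixes S :: "'a set" and f :: "'a \<Rightarrow> 'a \<Rightarrow> 'a" (infixl "\<cdot>" 70) and z :: 'a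
  assumes czs: "completely_zero_simple S f z"
begin

lemma sg: "semigroup_on S f" using czs unfolding completely_zero_simple_def by blast
lemma cl[simp, intro]: "a \<in> S \<Longrightarrow> b \<in> S \<Longrightarrow> a \<cdot> b \<in> S"
  using sg unfolding semigroup_on_def by blast
lemma as: "a \<in> S \<Longrightarrow> b \<in> S \<Longrightarrow> c \<in> S \<Longrightarrow> a \<cdot> b \<cdot> c = a \<cdot> (b \<cdot> c)"
  using sg unfolding semigroup_on_def by blast
lemma isz: "is_zero S f z" using czs unfolding completely_zero_simple_def by blast
lemma zS[simp, intro]: "z \<in> S" using isz unfolding is_zero_def by blast
lemma zl[simp]: "a \<in> S \<Longrightarrow> z \<cdot> a = z" using isz unfolding is_zero_def by blast
lemma zr[simp]: "a \<in> S \<Longrightarrow> a \<cdot> z = z" using isz unfolding is_zero_def by blast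

lemma nzl: "a \<in> S \<Longrightarrow> b \<in> S \<Longrightarrow> a \<cdot> b \<noteq> z \<Longrightarrow> a \<noteq> z" by auto
lemma nzr: "a \<in> S \<Longrightarrow> b \<in> S \<Longrightarrow> a \<cdot> b \<noteq> z \<Longrightarrow> b \<noteq> z" by auto

lemma S2: assumes "s \<in> S" shows "\<exists>a\<in>S. \<exists>b\<in>S. s = a \<cdot> b"
proof -
  let ?I = "{a \<cdot> b | a b. a \<in> S \<and> b \<in> S}"
  have "sg_ideal S f ?I" unfolding sg_ideal_def
  proof (intro conjI ballI)
    show "?I \<subseteq> S" by auto
    show "?I \<noteq> {}" by blast
  next
    fix t i assume "t \<in> S" "i \<in> ?I"
    then obtain a b where ab: "a \<in> S" "b \<in> S" "i = a \<cdot> b" by blast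
    have "t \<cdot> i = (t \<cdot> a) \<cdot> b" using ab \<open>t \<in> S\<close> by (simp add: as)
    moreover have "i \<cdot> t = a \<cdot> (b \<cdot> t)" using ab \<open>t \<in> S\<close> by (simp add: as)
    ultimately show "t \<cdot> i \<in> ?I" "i \<cdot> t \<in> ?I" using ab \<open>t \<in> S\<close> by blast+
  qed
  moreover have "?I \<noteq> {z}" using czs unfolding completely_zero_simple_def by blast
  ultimately have "?I = S" using czs unfolding completely_zero_simple_def by blast
  then show ?thesis using assms by blast
qed

lemma SaS: assumes a: "a \<in> S" "a \<noteq> z" and s: "s \<in> S" shows "\<exists>u\<in>S. \<exists>v\<in>S. s = u \<cdot> a \<cdot> v"
proof -
  let ?I = "{s \<in> S. s = a \<or> (\<exists>u\<in>S. s = u \<cdot> a) \<or> (\<exists>v\<in>S. s = a \<cdot> v) \<or> (\<exists>u\<in>S. \<exists>v\<in>S. s = u \<cdot> a \<cdot> v)}"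
  have "sg_ideal S f ?I" unfolding sg_ideal_def
  proof (intro conjI ballI)
    show "?I \<subseteq> S" by auto
    show "?I \<noteq> {}" using a by blast
  next
    fix t i assume t: "t \<in> S" and "i \<in> ?I"
    then have i: "i \<in> S" "i = a \<or> (\<exists>u\<in>S. i = u \<cdot> a) \<or> (\<exists>v\<in>S. i = a \<cdot> v) \<or> (\<exists>u\<in>S. \<exists>v\<in>S. i = u \<cdot> a \<cdot> v)" by auto
    have l: "t \<cdot> i \<in> ?I"
      using i(2)
    proof (elim disjE bexE)
      assume "i = a" then show ?thesis using t a by auto
    next
      fix u assume "u \<in> S" "i = u \<cdot> a"
      then have "t \<cdot> i = (t \<cdot> u) \<cdot> a" using t a by (simp add: as)
      moreover have "t \<cdot> u \<in> S" using t \<open>u \<in> S\<close> by simp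
      ultimately show ?thesis using t a i(1) by blast
    next
      fix v assume "v \<in> S" "i = a \<cdot> v"
      then have "t \<cdot> i = t \<cdot> a \<cdot> v" using t a by (simp add: as)
      moreover have "t \<cdot> i \<in> S" using t i(1) by simp
      ultimately show ?thesis using t a \<open>v \<in> S\<close> by blast
    next
      fix u v assume "u \<in> S" "v \<in> S" "i = u \<cdot> a \<cdot> v"
      then have "t \<cdot> i = (t \<cdot> u) \<cdot> a \<cdot> v" using t a by (simp add: as)
      moreover have "t \<cdot> u \<in> S" using t \<open>u \<in> S\<close> by simp
      ultimately show ?thesis using t a i(1) \<open>v \<in> S\<close> by blast
    qed
    have r: "i \<cdot> t \<in> ?I"
      using i(2)
    proof (elim disjE bexE)
      assume "i = a" then show ?thesis using t a by auto
    next
      fix u assume "u \<in> S" "i = u \<cdot> a"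
      then show ?thesis using t a i(1) by blast
    next
      fix v assume "v \<in> S" "i = a \<cdot> v"
      then have "i \<cdot> t = a \<cdot> (v \<cdot> t)" using t a by (simp add: as)
      moreover have "v \<cdot> t \<in> S" using t \<open>v \<in> S\<close> by simp
      ultimately show ?thesis using t a i(1) by blast
    next
      fix u v assume "u \<in> S" "v \<in> S" "i = u \<cdot> a \<cdot> v"
      then have "i \<cdot> t = u \<cdot> a \<cdot> (v \<cdot> t)" using t a by (simp add: as)
      moreover have "v \<cdot> t \<in> S" using t \<open>v \<in> S\<close> by simp
      ultimately show ?thesis using t a i(1) \<open>u \<in> S\<close> by blast
    qed
    show "t \<cdot> i \<in> ?I" "i \<cdot> t \<in> ?I" using l r by blast+
  qed
  moreover have "?I \<noteq> {z}" using a by blast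
  ultimately have I: "?I = S" using czs unfolding completely_zero_simple_def by blast
  obtain s1 s2 where s12: "s1 \<in> S" "s2 \<in> S" "s = s1 \<cdot> s2" using S2[OF s] by blast
  obtain m s3 where m3: "m \<in> S" "s3 \<in> S" "s2 = m \<cdot> s3" using S2[OF s12(2)] by blast
  have "m \<in> ?I" using I m3 by blast
  then have "m = a \<or> (\<exists>u\<in>S. m = u \<cdot> a) \<or> (\<exists>v\<in>S. m = a \<cdot> v) \<or> (\<exists>u\<in>S. \<exists>v\<in>S. m = u \<cdot> a \<cdot> v)" by blast
  then show ?thesis
  proof (elim disjE bexE)
    assume "m = a" then show ?thesis using s12 m3 a by (intro bexI[of _ s1] bexI[of _ s3]) (auto simp: as)
  next
    fix u assume "u \<in> S" "m = u \<cdot> a"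
    then show ?thesis using s12 m3 a by (intro bexI[of _ "s1 \<cdot> u"] bexI[of _ s3]) (auto simp: as)
  next
    fix v assume "v \<in> S" "m = a \<cdot> v"
    then show ?thesis using s12 m3 a by (intro bexI[of _ s1] bexI[of _ "v \<cdot> s3"]) (auto simp: as)
  next
    fix u v assume "u \<in> S" "v \<in> S" "m = u \<cdot> a \<cdot> v"
    then show ?thesis using s12 m3 a by (intro bexI[of _ "s1 \<cdot> u"] bexI[of _ "v \<cdot> s3"]) (auto simp: as)
  qed
qed

definition e0 where "e0 = (SOME e. primitive_idempotent S f z e)"
lemma e0: "primitive_idempotent S f z e0"
  unfolding e0_def using czs unfolding completely_zero_simple_def by (metis someI_ex)
lemma e0S[simp]: "e0 \<in> S" and e0z: "e0 \<noteq> z" and e0e: "e0 \<cdot> e0 = e0"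
  using e0 unfolding primitive_idempotent_def by auto
lemma e0prim: "g \<in> S \<Longrightarrow> g \<noteq> z \<Longrightarrow> g \<cdot> g = g \<Longrightarrow> e0 \<cdot> g = g \<Longrightarrow> g \<cdot> e0 = g \<Longrightarrow> g = e0"
  using e0 unfolding primitive_idempotent_def by auto

lemma claim1: assumes a: "a \<in> S" "a \<noteq> z" "e0 \<cdot> a = a" shows "\<exists>t\<in>S. e0 = a \<cdot> t"
proof -
  obtain u v where uv: "u \<in> S" "v \<in> S" "e0 = u \<cdot> a \<cdot> v" using SaS[OF a(1,2) e0S] by blast
  have uv3: "u \<cdot> (a \<cdot> v) = e0" using uv a by (simp add: as)
  define u2 where "u2 = e0 \<cdot> u \<cdot> e0"
  define v2 where "v2 = v \<cdot> e0"
  have S2: "u2 \<in> S" "v2 \<in> S" unfolding u2_def v2_def using uv(1,2) by auto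
  have E: "u2 \<cdot> (a \<cdot> v2) = e0"
  proof -
    have "u2 \<cdot> (a \<cdot> v2) = e0 \<cdot> (u \<cdot> ((e0 \<cdot> a) \<cdot> (v \<cdot> e0)))" unfolding u2_def v2_def using uv(1,2) a(1) by (simp add: as)
    also have "\<dots> = e0 \<cdot> (u \<cdot> (a \<cdot> v)) \<cdot> e0" using uv(1,2) a by (simp add: as)
    also have "\<dots> = e0" using uv3 e0e by simp
    finally show ?thesis .
  qed
  have eu2: "e0 \<cdot> u2 = u2" unfolding u2_def using uv(1,2) by (metis as e0S e0e cl)
  have u2e: "u2 \<cdot> e0 = u2" unfolding u2_def using uv(1,2) by (metis as e0S e0e cl)
  define g where "g = a \<cdot> (v2 \<cdot> u2)"
  have gS: "g \<in> S" unfolding g_def using a S2 by auto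
  have gg: "g \<cdot> g = g"
  proof -
    have "g \<cdot> g = a \<cdot> (v2 \<cdot> ((u2 \<cdot> (a \<cdot> v2)) \<cdot> u2))" unfolding g_def using a(1) S2 by (simp add: as)
    also have "\<dots> = a \<cdot> (v2 \<cdot> (e0 \<cdot> u2))" using E by simp
    also have "\<dots> = g" unfolding g_def using eu2 by simp
    finally show ?thesis .
  qed
  have eg: "e0 \<cdot> g = g" unfolding g_def using a S2 by (metis as e0S cl)
  have ge: "g \<cdot> e0 = g" unfolding g_def using a S2 u2e by (metis as e0S cl)
  have gz: "g \<noteq> z"
  proof
    assume "g = z"
    have "u2 \<cdot> (g \<cdot> (a \<cdot> v2)) = (u2 \<cdot> (a \<cdot> v2)) \<cdot> (u2 \<cdot> (a \<cdot> v2))" unfolding g_def using a(1) S2 by (simp add: as)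
    also have "\<dots> = e0" using E e0e by simp
    finally show False using \<open>g = z\<close> a(1) S2 e0z by simp
  qed
  have "g = e0" using e0prim[OF gS gz gg eg ge] .
  then show ?thesis unfolding g_def using a S2 by (intro bexI[of _ "v2 \<cdot> u2"]) auto
qed

lemma claim1': assumes a: "a \<in> S" "a \<noteq> z" "a \<cdot> e0 = a" shows "\<exists>t\<in>S. e0 = t \<cdot> a"
proof -
  obtain u v where uv: "u \<in> S" "v \<in> S" "e0 = u \<cdot> a \<cdot> v" using SaS[OF a(1,2) e0S] by blast
  have uv3: "u \<cdot> (a \<cdot> v) = e0" using uv a by (simp add: as)
  define u2 where "u2 = e0 \<cdot> u"
  define v2 where "v2 = e0 \<cdot> v \<cdot> e0"
  have S2: "u2 \<in> S" "v2 \<in> S" unfolding u2_def v2_def using uv(1,2) by auto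
  have E: "u2 \<cdot> (a \<cdot> v2) = e0"
  proof -
    have "u2 \<cdot> (a \<cdot> v2) = e0 \<cdot> (u \<cdot> ((a \<cdot> e0) \<cdot> (v \<cdot> e0)))" unfolding u2_def v2_def using uv(1,2) a(1) by (simp add: as)
    also have "\<dots> = e0 \<cdot> (u \<cdot> (a \<cdot> v)) \<cdot> e0" using uv(1,2) a by (simp add: as)
    also have "\<dots> = e0" using uv3 e0e by simp
    finally show ?thesis .
  qed
  have ev2: "e0 \<cdot> v2 = v2" unfolding v2_def using uv(1,2) by (metis as e0S e0e cl)
  have v2e: "v2 \<cdot> e0 = v2" unfolding v2_def using uv(1,2) by (metis as e0S e0e cl)
  define g where "g = v2 \<cdot> (u2 \<cdot> a)"
  have gS: "g \<in> S" unfolding g_def using a S2 by auto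
  have gg: "g \<cdot> g = g"
  proof -
    have "g \<cdot> g = v2 \<cdot> ((u2 \<cdot> (a \<cdot> v2)) \<cdot> (u2 \<cdot> a))" unfolding g_def using a(1) S2 by (simp add: as)
    also have "\<dots> = (v2 \<cdot> e0) \<cdot> (u2 \<cdot> a)" using E a(1) S2 by (simp add: as)
    also have "\<dots> = g" unfolding g_def using v2e by simp
    finally show ?thesis .
  qed
  have eg: "e0 \<cdot> g = g" unfolding g_def using a S2 ev2 by (metis as e0S cl)
  have ge: "g \<cdot> e0 = g" unfolding g_def using a S2 by (metis as e0S cl)
  have gz: "g \<noteq> z"
  proof
    assume "g = z"
    have "(u2 \<cdot> a) \<cdot> (g \<cdot> v2) = (u2 \<cdot> (a \<cdot> v2)) \<cdot> (u2 \<cdot> (a \<cdot> v2))" unfolding g_def using a(1) S2 by (simp add: as)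
    also have "\<dots> = e0" using E e0e by simp
    finally show False using \<open>g = z\<close> a(1) S2 e0z by simp
  qed
  have "g = e0" using e0prim[OF gS gz gg eg ge] .
  then show ?thesis unfolding g_def using a S2 by (intro bexI[of _ "v2 \<cdot> u2"]) (auto simp: as)
qed

lemma SeS: assumes "s \<in> S" shows "\<exists>u\<in>S. \<exists>v\<in>S. s = u \<cdot> e0 \<cdot> v"
  using SaS[OF e0S e0z assms] .

lemma F1: assumes xy: "x \<in> S" "y \<in> S" "x \<cdot> y \<noteq> z" shows "\<exists>t\<in>S. x = x \<cdot> y \<cdot> t"
proof -
  obtain s t where st: "s \<in> S" "t \<in> S" "x = s \<cdot> (e0 \<cdot> t)" using SeS[OF xy(1)] by (auto simp: as)
  define a where "a = e0 \<cdot> (t \<cdot> y)"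
  have aS: "a \<in> S" unfolding a_def using st xy by auto
  have xya: "x \<cdot> y = s \<cdot> a" unfolding a_def using st xy by (simp add: as)
  have az: "a \<noteq> z" using xya xy st by auto
  have ea: "e0 \<cdot> a = a" unfolding a_def using st xy by (metis as e0S e0e cl)
  obtain t' where t': "t' \<in> S" "a \<cdot> t' = e0" using claim1[OF aS az ea] by metis
  have "x = s \<cdot> ((e0 \<cdot> e0) \<cdot> t)" using st e0e by simp
  also have "\<dots> = s \<cdot> ((a \<cdot> t') \<cdot> (e0 \<cdot> t))" using st by (simp add: as) (metis t'(2))
  also have "\<dots> = (s \<cdot> a) \<cdot> (t' \<cdot> (e0 \<cdot> t))" using st(1,2) t'(1) aS by (simp add: as)
  also have "\<dots> = (x \<cdot> y) \<cdot> (t' \<cdot> (e0 \<cdot> t))" by (metis xya)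
  finally have "x = x \<cdot> y \<cdot> (t' \<cdot> (e0 \<cdot> t))" .
  moreover have "t' \<cdot> (e0 \<cdot> t) \<in> S" using t'(1) st by simp
  ultimately show ?thesis by blast
qed

lemma F1': assumes xy: "x \<in> S" "y \<in> S" "x \<cdot> y \<noteq> z" shows "\<exists>t\<in>S. y = t \<cdot> x \<cdot> y"
proof -
  obtain s t where st: "s \<in> S" "t \<in> S" "y = s \<cdot> e0 \<cdot> t" using SeS[OF xy(2)] by blast
  define a where "a = (x \<cdot> s) \<cdot> e0"
  have aS: "a \<in> S" unfolding a_def using st xy by auto
  have xya: "x \<cdot> y = a \<cdot> t" unfolding a_def using st xy by (simp add: as)
  have az: "a \<noteq> z" using xya xy st by auto
  have ea: "a \<cdot> e0 = a" unfolding a_def using st xy by (metis as e0S e0e cl)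
  obtain t' where t': "t' \<in> S" "t' \<cdot> a = e0" using claim1'[OF aS az ea] by metis
  have "y = s \<cdot> (e0 \<cdot> e0) \<cdot> t" using st e0e by simp
  also have "\<dots> = s \<cdot> (e0 \<cdot> (t' \<cdot> a)) \<cdot> t" by (metis t'(2))
  also have "\<dots> = (s \<cdot> e0 \<cdot> t') \<cdot> (a \<cdot> t)" using st t'(1) aS by (simp add: as)
  also have "\<dots> = (s \<cdot> e0 \<cdot> t') \<cdot> (x \<cdot> y)" by (metis xya)
  also have "\<dots> = (s \<cdot> e0 \<cdot> t') \<cdot> x \<cdot> y" using st t'(1) xy by (simp add: as)
  finally have "y = (s \<cdot> e0 \<cdot> t') \<cdot> x \<cdot> y" .
  moreover have "s \<cdot> e0 \<cdot> t' \<in> S" using st t' by simp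
  ultimately show ?thesis by blast
qed

lemma selfR: assumes "x \<in> S" "x \<noteq> z" shows "\<exists>t\<in>S. x = x \<cdot> t"
proof -
  obtain s t where st: "s \<in> S" "t \<in> S" "x = s \<cdot> e0 \<cdot> t" using SeS[OF assms(1)] by blast
  have "s \<cdot> e0 \<cdot> t \<noteq> z" using st assms by simp
  then obtain t' where t': "t' \<in> S" "s \<cdot> e0 = s \<cdot> e0 \<cdot> t \<cdot> t'" using F1[of "s \<cdot> e0" t] st by auto
  have "x = (s \<cdot> e0) \<cdot> t" using st by simp
  also have "\<dots> = (s \<cdot> e0 \<cdot> t \<cdot> t') \<cdot> t" by (metis t'(2))
  also have "\<dots> = x \<cdot> (t' \<cdot> t)" using st t'(1) by (simp add: as)
  finally show ?thesis using \<open>t' \<in> S\<close> st by auto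
qed

lemma selfL: assumes "x \<in> S" "x \<noteq> z" shows "\<exists>t\<in>S. x = t \<cdot> x"
proof -
  obtain s t where st: "s \<in> S" "t \<in> S" "x = s \<cdot> e0 \<cdot> t" using SeS[OF assms(1)] by blast
  have "s \<cdot> (e0 \<cdot> t) \<noteq> z" using st assms by (simp add: as)
  then obtain t' where t': "t' \<in> S" "e0 \<cdot> t = t' \<cdot> s \<cdot> (e0 \<cdot> t)" using F1'[of s "e0 \<cdot> t"] st by auto
  have "x = s \<cdot> (e0 \<cdot> t)" using st by (simp add: as)
  also have "\<dots> = s \<cdot> (t' \<cdot> s \<cdot> (e0 \<cdot> t))" by (metis t'(2))
  also have "\<dots> = (s \<cdot> t') \<cdot> x" using st t'(1) by (simp add: as)
  finally show ?thesis using \<open>t' \<in> S\<close> st by auto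
qed

definition Ge where "Ge e = {x \<in> S. x \<noteq> z \<and> e \<cdot> x = x \<and> x \<cdot> e = x}"

lemma Ge_inv: assumes e: "e \<in> S" "e \<cdot> e = e" "e \<noteq> z" and x: "x \<in> Ge e"
  shows "\<exists>y\<in>Ge e. x \<cdot> y = e \<and> y \<cdot> x = e"
proof -
  have xS: "x \<in> S" "x \<noteq> z" "e \<cdot> x = x" "x \<cdot> e = x" using x unfolding Ge_def by auto
  obtain t where t: "t \<in> S" "e = e \<cdot> x \<cdot> t" using F1[of e x] e xS by auto
  have xt: "x \<cdot> t = e" using t xS by metis
  obtain t' where t': "t' \<in> S" "e = t' \<cdot> x \<cdot> e" using F1'[of x e] e xS by auto
  have tx: "t' \<cdot> x = e" using t' xS e by (metis as)
  define y where "y = e \<cdot> t \<cdot> e"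
  define y' where "y' = e \<cdot> t' \<cdot> e"
  have yS: "y \<in> S" "y' \<in> S" unfolding y_def y'_def using e t t' by auto
  have xy: "x \<cdot> y = e" unfolding y_def using xS xt e t(1) by (metis as cl)
  have y'x: "y' \<cdot> x = e" unfolding y'_def using xS tx e t'(1) by (metis as cl)
  have ey: "e \<cdot> y = y" unfolding y_def using e t(1) by (metis as cl)
  have ye: "y \<cdot> e = y" unfolding y_def using e t(1) by (metis as cl)
  have y'e: "y' \<cdot> e = y'" unfolding y'_def using e t'(1) by (metis as cl)
  have "y' = y' \<cdot> (x \<cdot> y)" using xy y'e by simp
  also have "\<dots> = (y' \<cdot> x) \<cdot> y" using yS xS by (simp add: as)
  also have "\<dots> = y" using y'x ey by simp
  finally have "y' = y" .
  then have yx: "y \<cdot> x = e" using y'x by simp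
  have "y \<noteq> z" using xy xS e by auto
  then have "y \<in> Ge e" unfolding Ge_def using yS ey ye by auto
  then show ?thesis using xy yx by blast
qed

lemma Ge_mult: assumes e: "e \<in> S" "e \<cdot> e = e" "e \<noteq> z" and x: "x \<in> Ge e" and y: "y \<in> Ge e"
  shows "x \<cdot> y \<in> Ge e"
proof -
  obtain x' where x': "x' \<in> Ge e" "x' \<cdot> x = e" using Ge_inv[OF e x] by blast
  have S: "x \<in> S" "y \<in> S" "x' \<in> S" "e \<cdot> x = x" "y \<cdot> e = y" "e \<cdot> y = y" "y \<noteq> z"
    using x y x' unfolding Ge_def by auto
  have xxy: "x' \<cdot> (x \<cdot> y) = y" using S x' by (metis as)
  have "x \<cdot> y \<noteq> z"
  proof
    assume "x \<cdot> y = z" then have "y = z" using xxy S by simp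
    then show False using S by simp
  qed
  moreover have "e \<cdot> (x \<cdot> y) = x \<cdot> y" using S e(1) as[of e x y] by simp
  moreover have "(x \<cdot> y) \<cdot> e = x \<cdot> y" using S e(1) as[of x y e] by simp
  ultimately show ?thesis unfolding Ge_def using S by simp
qed

lemma Ge_sub: assumes e: "e \<in> S" "e \<cdot> e = e" "e \<noteq> z" shows "sg_subgroup S f (Ge e)"
proof -
  have eG: "e \<in> Ge e" unfolding Ge_def using e by auto
  have 1: "Ge e \<subseteq> S" unfolding Ge_def by auto
  have 2: "\<forall>x\<in>Ge e. \<forall>y\<in>Ge e. x \<cdot> y \<in> Ge e" using Ge_mult[OF e] by blast
  have 3: "\<forall>h\<in>Ge e. e \<cdot> h = h \<and> h \<cdot> e = h" unfolding Ge_def by auto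
  have 4: "\<forall>h\<in>Ge e. \<exists>h'\<in>Ge e. h \<cdot> h' = e \<and> h' \<cdot> h = e" using Ge_inv[OF e] by blast
  have 5: "\<exists>e'\<in>Ge e. (\<forall>h\<in>Ge e. e' \<cdot> h = h \<and> h \<cdot> e' = h) \<and> (\<forall>h\<in>Ge e. \<exists>h'\<in>Ge e. h \<cdot> h' = e' \<and> h' \<cdot> h = e')"
    using eG 3 4 by (intro bexI[of _ e]) auto
  show ?thesis unfolding sg_subgroup_def using 1 2 5 by (intro conjI)
qed

lemma sub_Ge: assumes K: "sg_subgroup S f K" and eK: "e \<in> K" "\<forall>h\<in>K. e \<cdot> h = h \<and> h \<cdot> e = h"
  and inv: "\<forall>h\<in>K. \<exists>h'\<in>K. h \<cdot> h' = e \<and> h' \<cdot> h = e" and ez: "e \<noteq> z"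
  shows "K \<subseteq> Ge e"
proof
  fix k assume k: "k \<in> K"
  have kS: "k \<in> S" using K k unfolding sg_subgroup_def by auto
  obtain k' where "k' \<in> K" "k \<cdot> k' = e" using inv k by blast
  moreover have "k' \<in> S" using K \<open>k' \<in> K\<close> unfolding sg_subgroup_def by auto
  ultimately have "k \<noteq> z" using ez by auto
  then show "k \<in> Ge e" unfolding Ge_def using kS eK k by auto
qed

lemma Ge_max: assumes e: "e \<in> S" "e \<cdot> e = e" "e \<noteq> z" shows "nonzero_max_subgroup S f z (Ge e)"
proof -
  have eG: "e \<in> Ge e" unfolding Ge_def using e by auto
  have "max_subgroup S f (Ge e)" unfolding max_subgroup_def
  proof (intro conjI allI impI)
    show "sg_subgroup S f (Ge e)" by (rule Ge_sub[OF e])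
    fix K assume K: "sg_subgroup S f K \<and> Ge e \<subseteq> K"
    then obtain eK where eK: "eK \<in> K" "\<forall>h\<in>K. eK \<cdot> h = h \<and> h \<cdot> eK = h"
      "\<forall>h\<in>K. \<exists>h'\<in>K. h \<cdot> h' = eK \<and> h' \<cdot> h = eK" and KS: "K \<subseteq> S"
      unfolding sg_subgroup_def by blast
    have eK2: "e \<in> K" using K eG by auto
    obtain e' where e': "e' \<in> K" "e' \<cdot> e = eK" using eK(3) eK2 by blast
    have "eK = e' \<cdot> (e \<cdot> e)" using e' e by simp
    also have "\<dots> = (e' \<cdot> e) \<cdot> e" using e'(1) KS e(1) by (simp add: as subset_iff)
    also have "\<dots> = e" using e' eK(2) eK2 by simp
    finally have "eK = e" .
    then have "K \<subseteq> Ge e" using sub_Ge[of K e] K eK e by blast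
    then show "K = Ge e" using K by blast
  qed
  moreover have "Ge e \<noteq> {z}" using eG e by auto
  ultimately show ?thesis unfolding nonzero_max_subgroup_def by blast
qed

lemma max_is_Ge: assumes "nonzero_max_subgroup S f z H"
  shows "\<exists>e. e \<in> S \<and> e \<cdot> e = e \<and> e \<noteq> z \<and> H = Ge e"
proof -
  have H: "sg_subgroup S f H" "\<forall>K. sg_subgroup S f K \<and> H \<subseteq> K \<longrightarrow> K = H" "H \<noteq> {z}"
    using assms unfolding nonzero_max_subgroup_def max_subgroup_def by auto
  then obtain e where eH: "e \<in> H" "\<forall>h\<in>H. e \<cdot> h = h \<and> h \<cdot> e = h"
      "\<forall>h\<in>H. \<exists>h'\<in>H. h \<cdot> h' = e \<and> h' \<cdot> h = e" and HS: "H \<subseteq> S"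
    unfolding sg_subgroup_def by blast
  have eS: "e \<in> S" "e \<cdot> e = e" using eH HS by auto
  have ez: "e \<noteq> z"
  proof
    assume "e = z"
    then have "\<forall>h\<in>H. h = z" using eH HS by (metis subsetD zl)
    then have "H \<subseteq> {z}" by blast
    moreover have "z \<in> H" using eH(1) \<open>\<forall>h\<in>H. h = z\<close> by metis
    ultimately have "H = {z}" by blast
    then show False using H(3) by simp
  qed
  have "H \<subseteq> Ge e" using sub_Ge[OF H(1) eH ez] .
  then have "Ge e = H" using H(2) Ge_sub[OF eS ez] by blast
  then show ?thesis using eS ez by auto
qed

definition Lc where "Lc b = (\<lambda>s. s \<cdot> b) ` S"

lemma Lc_mult: assumes "a \<in> S" "b \<in> S" "a \<cdot> b \<noteq> z" shows "Lc (a \<cdot> b) = Lc b"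
proof
  show "Lc (a \<cdot> b) \<subseteq> Lc b"
  proof
    fix c assume "c \<in> Lc (a \<cdot> b)"
    then obtain s where s: "s \<in> S" "c = s \<cdot> (a \<cdot> b)" unfolding Lc_def by auto
    then have "c = (s \<cdot> a) \<cdot> b" using assms by (simp add: as)
    then show "c \<in> Lc b" unfolding Lc_def using s assms by auto
  qed
  obtain t where t: "t \<in> S" "b = t \<cdot> a \<cdot> b" using F1'[OF assms] by blast
  show "Lc b \<subseteq> Lc (a \<cdot> b)"
  proof
    fix c assume "c \<in> Lc b"
    then obtain s where s: "s \<in> S" "c = s \<cdot> b" unfolding Lc_def by auto
    then have "c = (s \<cdot> t) \<cdot> (a \<cdot> b)" using t assms by (metis as cl)
    then show "c \<in> Lc (a \<cdot> b)" unfolding Lc_def using s t by auto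
  qed
qed

lemma Lc_self: assumes "b \<in> S" "b \<noteq> z" shows "b \<in> Lc b"
  using selfL[OF assms] unfolding Lc_def by auto

lemma Lc_eq: assumes "c \<in> Lc b" "c \<noteq> z" "b \<in> S" shows "Lc c = Lc b"
proof -
  obtain s where s: "s \<in> S" "c = s \<cdot> b" using assms(1) unfolding Lc_def by auto
  then show ?thesis using Lc_mult[of s b] assms by simp
qed

end

locale czsg = czs +
  fixes X :: "nat set" and \<sigma> :: "nat \<Rightarrow> 'a" and e :: 'a
  assumes gen: "finite_generators S f X \<sigma>"
    and eS: "e \<in> S" and ee: "e \<cdot> e = e" and ez: "e \<noteq> z"
begin

lemma finX: "finite X" using gen unfolding finite_generators_def by blast
lemma \<sigma>S[simp]: "x \<in> X \<Longrightarrow> \<sigma> x \<in> S" using gen unfolding finite_generators_def by blast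
lemma surj: "s \<in> S \<Longrightarrow> \<exists>w. w \<noteq> [] \<and> set w \<subseteq> X \<and> word_val f \<sigma> w = s"
  using gen unfolding finite_generators_def by blast

lemma wv_S: "set w \<subseteq> X \<Longrightarrow> w \<noteq> [] \<Longrightarrow> word_val f \<sigma> w \<in> S"
proof (induction w rule: rev_induct)
  case Nil then show ?case by simp
next
  case (snoc x w)
  then show ?case by (cases "w = []") (auto simp: wv_prodl prodl_snoc)
qed

lemma Lc_gen: assumes "b \<in> S" "b \<noteq> z" shows "\<exists>x\<in>X. \<sigma> x \<noteq> z \<and> Lc b = Lc (\<sigma> x)"
proof -
  obtain w where w: "w \<noteq> []" "set w \<subseteq> X" "word_val f \<sigma> w = b" using surj[OF assms(1)] by blast
  then obtain w' x where wx: "w = w' @ [x]" by (metis rev_exhaust)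
  show ?thesis
  proof (cases "w' = []")
    case True then show ?thesis using w wx assms by auto
  next
    case False
    have b: "b = word_val f \<sigma> w' \<cdot> \<sigma> x" using w wx False by (simp add: wv_prodl prodl_snoc)
    have S: "word_val f \<sigma> w' \<in> S" "\<sigma> x \<in> S" "x \<in> X" using wv_S[of w'] w wx False by auto
    have "\<sigma> x \<noteq> z"
    proof
      assume "\<sigma> x = z" then have "b = z" using b S by simp
      then show False using assms by simp
    qed
    moreover have "Lc b = Lc (\<sigma> x)" using b S assms Lc_mult by simp
    ultimately show ?thesis using S by auto
  qed
qed

definition \<Lambda> where "\<Lambda> = (\<lambda>x. Lc (\<sigma> x)) ` {x\<in>X. \<sigma> x \<noteq> z}"

lemma fin\<Lambda>: "finite \<Lambda>" unfolding \<Lambda>_def using finX by simp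

lemma Lc_in: "b \<in> S \<Longrightarrow> b \<noteq> z \<Longrightarrow> Lc b \<in> \<Lambda>"
  using Lc_gen unfolding \<Lambda>_def by blast

definition qq where "qq lc = (SOME q. q \<in> S \<and> q \<noteq> z \<and> e \<cdot> q = q \<and> Lc q = lc)"
definition qq' where "qq' lc = (SOME q'. q' \<in> S \<and> q' \<cdot> e = q' \<and> qq lc \<cdot> q' = e)"

lemma qq_ex: assumes "lc \<in> \<Lambda>" shows "\<exists>q. q \<in> S \<and> q \<noteq> z \<and> e \<cdot> q = q \<and> Lc q = lc"
proof -
  obtain x where x: "x \<in> X" "\<sigma> x \<noteq> z" "lc = Lc (\<sigma> x)" using assms unfolding \<Lambda>_def by auto
  obtain u v where uv: "u \<in> S" "v \<in> S" "e = u \<cdot> \<sigma> x \<cdot> v" using SaS[of "\<sigma> x" e] x eS by auto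
  define q where "q = (e \<cdot> u) \<cdot> \<sigma> x"
  have qS: "q \<in> S" unfolding q_def using uv x eS by auto
  have eq: "e \<cdot> q = q" unfolding q_def using uv x eS ee by (metis as cl \<sigma>S)
  have "e = e \<cdot> e" using ee by simp
  also have "\<dots> = e \<cdot> (u \<cdot> \<sigma> x \<cdot> v)" using uv(3) by metis
  also have "\<dots> = q \<cdot> v" unfolding q_def using uv x eS by (simp add: as)
  finally have "e = q \<cdot> v" .
  then have qz: "q \<noteq> z" using ez uv by auto
  have "Lc q = Lc (\<sigma> x)" unfolding q_def using Lc_mult[of "e \<cdot> u" "\<sigma> x"] qz uv x eS q_def by auto
  then show ?thesis using qS qz eq x by auto
qed

lemma qq: assumes "lc \<in> \<Lambda>" shows "qq lc \<in> S" "qq lc \<noteq> z" "e \<cdot> qq lc = qq lc" "Lc (qq lc) = lc"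
  using someI_ex[OF qq_ex[OF assms]] unfolding qq_def[symmetric] by auto

lemma qq'_ex: assumes "lc \<in> \<Lambda>" shows "\<exists>q'. q' \<in> S \<and> q' \<cdot> e = q' \<and> qq lc \<cdot> q' = e"
proof -
  obtain t where t: "t \<in> S" "e = e \<cdot> qq lc \<cdot> t" using F1[of e "qq lc"] qq[OF assms] eS by auto
  have qt: "qq lc \<cdot> t = e" using t qq[OF assms] by metis
  have "qq lc \<cdot> (t \<cdot> e) = e" using qt t qq[OF assms] eS ee by (metis as)
  moreover have "t \<cdot> e \<cdot> e = t \<cdot> e" using t eS ee by (simp add: as)
  ultimately show ?thesis using t eS by (intro exI[of _ "t \<cdot> e"]) auto
qed

lemma qq': assumes "lc \<in> \<Lambda>" shows "qq' lc \<in> S" "qq' lc \<cdot> e = qq' lc" "qq lc \<cdot> qq' lc = e"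
  using someI_ex[OF qq'_ex[OF assms]] unfolding qq'_def[symmetric] by auto

lemma qq_rid: assumes "lc \<in> \<Lambda>" "d \<in> lc" shows "d \<cdot> qq' lc \<cdot> qq lc = d"
proof -
  obtain s where s: "s \<in> S" "d = s \<cdot> qq lc" using assms(2) qq(4)[OF assms(1)] unfolding Lc_def by auto
  have "d \<cdot> qq' lc \<cdot> qq lc = s \<cdot> ((qq lc \<cdot> qq' lc) \<cdot> qq lc)"
    using s(1) qq(1)[OF assms(1)] qq'(1)[OF assms(1)] by (simp add: as s(2))
  also have "\<dots> = s \<cdot> (e \<cdot> qq lc)" using qq[OF assms(1)] qq'[OF assms(1)] by metis
  also have "\<dots> = s \<cdot> qq lc" using qq[OF assms(1)] by metis
  finally show ?thesis using s by simp
qed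

lemma zero_cond: assumes "b \<in> S" "b \<noteq> z" "c \<in> S" shows "b \<cdot> c = z \<longleftrightarrow> qq (Lc b) \<cdot> c = z"
proof -
  have l: "Lc b \<in> \<Lambda>" using Lc_in assms by auto
  have "b \<in> Lc (qq (Lc b))" using qq(4)[OF l] Lc_self assms by auto
  then obtain s where s: "s \<in> S" "b = s \<cdot> qq (Lc b)" unfolding Lc_def by auto
  have "qq (Lc b) \<in> Lc b" using qq(1,2,4)[OF l] Lc_self by metis
  then obtain s' where s': "s' \<in> S" "qq (Lc b) = s' \<cdot> b" unfolding Lc_def by auto
  show ?thesis
  proof
    assume "b \<cdot> c = z" then show "qq (Lc b) \<cdot> c = z" using s' assms by (metis as zr)
  next
    assume "qq (Lc b) \<cdot> c = z" then show "b \<cdot> c = z" using s assms qq(1)[OF l] by (metis as zr)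
  qed
qed

lemma exists_pre: assumes b: "b \<in> S" "b \<noteq> z" and c: "c \<in> S" "Lc b = Lc c"
  and l: "lc' \<in> \<Lambda>" "qq lc' \<cdot> c \<noteq> z"
  shows "\<exists>d\<in>S. d \<noteq> z \<and> Lc d = lc' \<and> d \<cdot> c = b"
proof -
  have "Lc (qq lc' \<cdot> c) = Lc c" using Lc_mult qq(1)[OF l(1)] c l by auto
  then have "b \<in> Lc (qq lc' \<cdot> c)" using c Lc_self b by auto
  then obtain r where r: "r \<in> S" "b = r \<cdot> (qq lc' \<cdot> c)" unfolding Lc_def by auto
  define d where "d = r \<cdot> qq lc'"
  have dS: "d \<in> S" unfolding d_def using r qq(1)[OF l(1)] by auto
  have dc: "d \<cdot> c = b" unfolding d_def using r qq(1)[OF l(1)] c by (simp add: as)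
  have dz: "d \<noteq> z" using dc b c by auto
  have "Lc d = lc'" unfolding d_def using Lc_mult[of r "qq lc'"] dz r qq[OF l(1)] d_def by auto
  then show ?thesis using dS dz dc by auto
qed

definition GA where "GA x = e \<cdot> \<sigma> x \<cdot> qq' (Lc (\<sigma> x))"
definition gg where "gg lc x = qq lc \<cdot> \<sigma> x \<cdot> qq' (Lc (\<sigma> x))"
definition GB where "GB lc = qq lc \<cdot> e"
definition SG where "SG = (GA ` X \<union> (\<lambda>(lc,x). gg lc x) ` (\<Lambda> \<times> X) \<union> GB ` \<Lambda>) \<inter> Ge e"

lemma finSG: "finite SG" unfolding SG_def using finX fin\<Lambda> by auto

lemma inG: assumes p: "p \<in> S" "p \<noteq> z" "e \<cdot> p = p"
  shows "p \<cdot> qq' (Lc p) \<in> Ge e" "p \<cdot> qq' (Lc p) \<cdot> qq (Lc p) = p"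
proof -
  have l: "Lc p \<in> \<Lambda>" using Lc_in p by auto
  show rid: "p \<cdot> qq' (Lc p) \<cdot> qq (Lc p) = p" using qq_rid[OF l] Lc_self p by auto
  have S: "p \<cdot> qq' (Lc p) \<in> S" using p qq'[OF l] by auto
  have nz: "p \<cdot> qq' (Lc p) \<noteq> z"
  proof
    assume "p \<cdot> qq' (Lc p) = z" then have "p = z" using rid qq(1)[OF l] by (metis zl)
    then show False using p by simp
  qed
  have "e \<cdot> (p \<cdot> qq' (Lc p)) = p \<cdot> qq' (Lc p)" using p eS qq'(1)[OF l] as[of e p "qq' (Lc p)"] by simp
  moreover have "p \<cdot> qq' (Lc p) \<cdot> e = p \<cdot> qq' (Lc p)" using p eS qq'[OF l] as[of p "qq' (Lc p)" e] by simp
  ultimately show "p \<cdot> qq' (Lc p) \<in> Ge e" unfolding Ge_def using S nz by auto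
qed

lemma pre_schreier: assumes "w \<noteq> []" "set w \<subseteq> X" "e \<cdot> word_val f \<sigma> w \<noteq> z"
  shows "\<exists>l. l \<noteq> [] \<and> set l \<subseteq> SG \<and> prodl f l = (e \<cdot> word_val f \<sigma> w) \<cdot> qq' (Lc (e \<cdot> word_val f \<sigma> w))"
  using assms
proof (induction w rule: rev_induct)
  case Nil then show ?case by simp
next
  case (snoc x w)
  have x: "x \<in> X" "\<sigma> x \<in> S" using snoc by auto
  show ?case
  proof (cases "w = []")
    case True
    then have p: "e \<cdot> word_val f \<sigma> (w @ [x]) = e \<cdot> \<sigma> x" by simp
    have nz: "e \<cdot> \<sigma> x \<noteq> z" using snoc p by simp
    have "Lc (e \<cdot> \<sigma> x) = Lc (\<sigma> x)" using Lc_mult eS x nz by simp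
    then have eq: "(e \<cdot> \<sigma> x) \<cdot> qq' (Lc (e \<cdot> \<sigma> x)) = GA x" unfolding GA_def by simp
    have "e \<cdot> (e \<cdot> \<sigma> x) = e \<cdot> \<sigma> x" using eS ee x by (metis as)
    then have "GA x \<in> Ge e" using inG(1)[of "e \<cdot> \<sigma> x"] eq eS x nz by auto
    then have "GA x \<in> SG" unfolding SG_def using x by auto
    then show ?thesis using p eq by (intro exI[of _ "[GA x]"]) auto
  next
    case False
    define p0 where "p0 = e \<cdot> word_val f \<sigma> w"
    have wS: "word_val f \<sigma> w \<in> S" using wv_S False snoc by auto
    have p0S: "p0 \<in> S" unfolding p0_def using wS eS by auto
    have pe: "e \<cdot> word_val f \<sigma> (w @ [x]) = p0 \<cdot> \<sigma> x" unfolding p0_def using False wS eS x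
      by (simp add: wv_prodl prodl_snoc as)
    have nz: "p0 \<cdot> \<sigma> x \<noteq> z" using snoc pe by simp
    have p0z: "p0 \<noteq> z" using nz x by auto
    have sxz: "\<sigma> x \<noteq> z" using nzr[OF p0S x(2) nz] .
    obtain l0 where l0: "l0 \<noteq> []" "set l0 \<subseteq> SG" "prodl f l0 = p0 \<cdot> qq' (Lc p0)"
      using snoc.IH[OF False] snoc.prems p0z unfolding p0_def by auto
    define lc where "lc = Lc p0"
    have lc: "lc \<in> \<Lambda>" unfolding lc_def using Lc_in p0S p0z by auto
    have lsx: "Lc (\<sigma> x) \<in> \<Lambda>" using Lc_in x sxz by auto
    have ep0: "e \<cdot> p0 = p0" unfolding p0_def using eS ee wS by (metis as)
    have Lcp: "Lc (p0 \<cdot> \<sigma> x) = Lc (\<sigma> x)" using Lc_mult p0S x nz by simp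
    have "(p0 \<cdot> \<sigma> x) \<cdot> qq' (Lc (p0 \<cdot> \<sigma> x)) = (p0 \<cdot> qq' lc \<cdot> qq lc) \<cdot> \<sigma> x \<cdot> qq' (Lc (\<sigma> x))"
      using inG(2)[OF p0S p0z ep0] Lcp unfolding lc_def by simp
    also have "\<dots> = (p0 \<cdot> qq' lc) \<cdot> gg lc x" unfolding gg_def
      using p0S qq(1)[OF lc] qq'(1)[OF lc] qq'(1)[OF lsx] x by (simp add: as)
    finally have eq: "(p0 \<cdot> \<sigma> x) \<cdot> qq' (Lc (p0 \<cdot> \<sigma> x)) = prodl f l0 \<cdot> gg lc x" using l0 unfolding lc_def by simp
    have ggS: "gg lc x \<in> S" unfolding gg_def using qq(1)[OF lc] qq'(1)[OF lsx] x by auto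
    have "(p0 \<cdot> \<sigma> x) \<cdot> qq' (Lc (p0 \<cdot> \<sigma> x)) \<in> Ge e"
      using inG(1)[of "p0 \<cdot> \<sigma> x"] p0S x nz ep0 as[of e p0 "\<sigma> x"] eS by simp
    then have ne: "prodl f l0 \<cdot> gg lc x \<noteq> z" using eq unfolding Ge_def by auto
    have "prodl f l0 \<in> S" using l0(3) p0S qq'(1)[OF lc] unfolding lc_def by simp
    from nzr[OF this ggS ne] have ggz: "gg lc x \<noteq> z" .
    have egg: "e \<cdot> gg lc x = gg lc x" unfolding gg_def using qq[OF lc] qq'(1)[OF lsx] x eS
      by (metis as cl)
    have gge: "gg lc x \<cdot> e = gg lc x" unfolding gg_def using qq[OF lc] qq'[OF lsx] x eS
      by (metis as cl)
    have "gg lc x \<in> Ge e" unfolding Ge_def using ggS ggz egg gge by auto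
    then have "gg lc x \<in> SG" unfolding SG_def using lc x by auto
    then show ?thesis using l0 eq pe prodl_snoc[OF l0(1), of f "gg lc x"]
      by (intro exI[of _ "l0 @ [gg lc x]"]) auto
  qed
qed

lemma schreier: assumes h: "h \<in> Ge e" shows "\<exists>l. l \<noteq> [] \<and> set l \<subseteq> SG \<and> prodl f l = h"
proof -
  have hS: "h \<in> S" "h \<noteq> z" "e \<cdot> h = h" "h \<cdot> e = h" using h unfolding Ge_def by auto
  obtain w where w: "w \<noteq> []" "set w \<subseteq> X" "word_val f \<sigma> w = h" using surj hS by blast
  obtain l where l: "l \<noteq> []" "set l \<subseteq> SG" "prodl f l = h \<cdot> qq' (Lc h)"
    using pre_schreier[OF w(1,2)] w(3) hS by auto
  define lc where "lc = Lc h"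
  have lc: "lc \<in> \<Lambda>" unfolding lc_def using Lc_in hS by auto
  have "h = (h \<cdot> qq' lc \<cdot> qq lc) \<cdot> e" using inG(2)[of h] hS unfolding lc_def by simp
  also have "\<dots> = (h \<cdot> qq' lc) \<cdot> GB lc" unfolding GB_def using hS qq(1)[OF lc] qq'(1)[OF lc] eS by (simp add: as)
  finally have eq: "h = prodl f l \<cdot> GB lc" using l unfolding lc_def by simp
  have GBS: "GB lc \<in> S" unfolding GB_def using qq(1)[OF lc] eS by auto
  have "prodl f l \<in> S" using l(3) hS qq'(1)[OF lc] unfolding lc_def by simp
  from nzr[OF this GBS] have GBz: "GB lc \<noteq> z" using eq hS by metis
  have "e \<cdot> GB lc = GB lc" unfolding GB_def using qq[OF lc] eS by (metis as)
  moreover have "GB lc \<cdot> e = GB lc" unfolding GB_def using qq[OF lc] eS ee by (metis as)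
  ultimately have "GB lc \<in> Ge e" unfolding Ge_def using GBS GBz by auto
  then have "GB lc \<in> SG" unfolding SG_def using lc by auto
  then show ?thesis using l eq prodl_snoc[OF l(1), of f "GB lc"] by (intro exI[of _ "l @ [GB lc]"]) auto
qed

lemma Ge_fg: "fin_generated (Ge e) f"
proof -
  obtain gs where gs: "set gs = SG" using finSG finite_list by blast
  have "finite_generators (Ge e) f {..<length gs} (\<lambda>i. gs ! i)"
    by (rule fg_from_list) (use gs schreier in \<open>auto simp: SG_def\<close>)
  then show ?thesis unfolding fin_generated_def by blast
qed

end

definition oedge :: "'a set \<Rightarrow> ('a \<Rightarrow> 'a \<Rightarrow> 'a) \<Rightarrow> nat set \<Rightarrow> (nat \<Rightarrow> 'a) \<Rightarrow> 'a option \<Rightarrow> nat + nat \<Rightarrow> 'a option \<Rightarrow> bool" where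
  "oedge S f X \<sigma> p l q \<longleftrightarrow> p \<in> vertices1 S \<and> q \<in> vertices1 S \<and>
     (case l of Inl x \<Rightarrow> x \<in> X \<and> q = act1 f p (\<sigma> x) | Inr x \<Rightarrow> x \<in> X \<and> act1 f q (\<sigma> x) = p)"

lemma act1_V: "p \<in> vertices1 S \<Longrightarrow> s \<in> S \<Longrightarrow> \<forall>a\<in>S. \<forall>b\<in>S. f a b \<in> S \<Longrightarrow> act1 f p s \<in> vertices1 S"
  by (cases p) (auto simp: vertices1_def)

lemma loop_path_iff:
  assumes sx: "\<forall>x\<in>X. \<sigma> x \<in> S" and cl: "\<forall>a\<in>S. \<forall>b\<in>S. f a b \<in> S"
  shows "loop_path S f X \<sigma> p w q \<longleftrightarrow> p \<in> vertices1 S \<and> run (oedge S f X \<sigma>) p w q"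
proof
  assume "loop_path S f X \<sigma> p w q"
  then show "p \<in> vertices1 S \<and> run (oedge S f X \<sigma>) p w q"
  proof (induction rule: loop_path.induct)
    case (lp_nil p) then show ?case by simp
  next
    case (lp_fwd x p w q)
    have "oedge S f X \<sigma> p (Inl x) (act1 f p (\<sigma> x))" unfolding oedge_def using lp_fwd by simp
    from run.run_cons[OF this conjunct2[OF lp_fwd.IH]] show ?case using lp_fwd.hyps(2) by simp
  next
    case (lp_bwd x p' p w q)
    have pV: "p \<in> vertices1 S" using act1_V[OF lp_bwd.hyps(2) sx[rule_format, OF lp_bwd.hyps(1)] cl] lp_bwd.hyps(3) by simp
    have "oedge S f X \<sigma> p (Inr x) p'" unfolding oedge_def using lp_bwd.hyps pV by simp
    from run.run_cons[OF this conjunct2[OF lp_bwd.IH]] show ?case using pV by simp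
  qed
next
  assume "p \<in> vertices1 S \<and> run (oedge S f X \<sigma>) p w q"
  then have "run (oedge S f X \<sigma>) p w q" "p \<in> vertices1 S" by auto
  then show "loop_path S f X \<sigma> p w q"
  proof (induction rule: run.induct)
    case (run_nil s) then show ?case by (rule lp_nil)
  next
    case (run_cons s l s' w t)
    show ?case
    proof (cases l)
      case (Inl x)
      then have x: "x \<in> X" "s' = act1 f s (\<sigma> x)" "s' \<in> vertices1 S" using run_cons(1) unfolding oedge_def by auto
      have "loop_path S f X \<sigma> s' w t" using run_cons.IH x(3) .
      then show ?thesis unfolding Inl using lp_fwd[OF x(1) run_cons.prems] x(2) by simp
    next
      case (Inr x)
      then have x: "x \<in> X" "act1 f s' (\<sigma> x) = s" "s' \<in> vertices1 S" using run_cons(1) unfolding oedge_def by auto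
      have "loop_path S f X \<sigma> s' w t" using run_cons.IH x(3) .
      then show ?thesis unfolding Inr using lp_bwd[of x X s' S f \<sigma> s w t] x by simp
    qed
  qed
qed


context czsg begin

definition edge where
  "edge b l b' \<longleftrightarrow> (case l of Inl x \<Rightarrow> x \<in> X \<and> b \<in> S \<and> b' = b \<cdot> \<sigma> x | Inr x \<Rightarrow> x \<in> X \<and> b' \<in> S \<and> b' \<cdot> \<sigma> x = b)"

definition ipath where "ipath b w c \<longleftrightarrow> b \<in> S \<and> run edge b w c"

definition Exc where "Exc = {Inl x # w @ [Inr y] | x y w. x \<in> X \<and> y \<in> X \<and> ipath (\<sigma> x) w (\<sigma> y)}"

lemma edge_S: "edge b l b' \<Longrightarrow> b \<in> S \<and> b' \<in> S"
  unfolding edge_def by (cases l) auto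

lemma run_edge_S: "run edge b w c \<Longrightarrow> b \<in> S \<Longrightarrow> c \<in> S"
  by (induction rule: run.induct) (auto dest: edge_S)

lemma ipath_S: "ipath b w c \<Longrightarrow> c \<in> S"
  unfolding ipath_def using run_edge_S by blast

lemma LP: "loop_path S f X \<sigma> p w q \<longleftrightarrow> p \<in> vertices1 S \<and> run (oedge S f X \<sigma>) p w q"
  by (rule loop_path_iff) auto

lemma ipath_oedge: "run edge b w c \<Longrightarrow> run (oedge S f X \<sigma>) (Some b) w (Some c)"
proof (induction rule: run.induct)
  case (run_nil s) then show ?case by simp
next
  case (run_cons b l b' w c)
  then have "oedge S f X \<sigma> (Some b) l (Some b')" unfolding edge_def oedge_def vertices1_def
    by (cases l) auto
  then show ?case using run_cons by auto
qed

lemma exc_loop: "u \<in> Exc \<Longrightarrow> run (oedge S f X \<sigma>) None u None"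
proof -
  assume "u \<in> Exc"
  then obtain x y w where u: "u = Inl x # w @ [Inr y]" "x \<in> X" "y \<in> X" "ipath (\<sigma> x) w (\<sigma> y)"
    unfolding Exc_def by blast
  have 1: "oedge S f X \<sigma> None (Inl x) (Some (\<sigma> x))" using u unfolding oedge_def vertices1_def by auto
  have 2: "oedge S f X \<sigma> (Some (\<sigma> y)) (Inr y) None" using u unfolding oedge_def vertices1_def by auto
  have "run (oedge S f X \<sigma>) (Some (\<sigma> x)) w (Some (\<sigma> y))" using u(4) ipath_oedge unfolding ipath_def by blast
  then show ?thesis using 1 2 u(1) by (auto simp: run_append_iff)
qed

lemma split_first: "run (oedge S f X \<sigma>) (Some b) w None \<Longrightarrow>
   \<exists>w1 y w2. w = w1 @ Inr y # w2 \<and> y \<in> X \<and> ipath b w1 (\<sigma> y) \<and> run (oedge S f X \<sigma>) None w2 None"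
proof (induction w arbitrary: b)
  case Nil then show ?case by simp
next
  case (Cons l w)
  then obtain p' where p': "oedge S f X \<sigma> (Some b) l p'" "run (oedge S f X \<sigma>) p' w None" by auto
  show ?case
  proof (cases l)
    case (Inl x)
    then have p'': "p' = Some (b \<cdot> \<sigma> x)" "x \<in> X" "b \<in> S" using p' unfolding oedge_def vertices1_def by auto
    from Cons.IH[of "b \<cdot> \<sigma> x"] p'' p' obtain w1 y w2 where
      "w = w1 @ Inr y # w2" "y \<in> X" "ipath (b \<cdot> \<sigma> x) w1 (\<sigma> y)" "run (oedge S f X \<sigma>) None w2 None" by auto
    then show ?thesis using Inl p'' unfolding ipath_def edge_def
      by (intro exI[of _ "l # w1"] exI[of _ y] exI[of _ w2]) auto
  next
    case (Inr x)
    then have x: "x \<in> X" "act1 f p' (\<sigma> x) = Some b" "p' \<in> vertices1 S" using p' unfolding oedge_def by auto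
    show ?thesis
    proof (cases p')
      case None
      then have "b = \<sigma> x" using x by simp
      then show ?thesis using Inr x None p'(2) unfolding ipath_def
        by (intro exI[of _ "[]"] exI[of _ x] exI[of _ w]) auto
    next
      case (Some b')
      then have b': "b' \<in> S" "b' \<cdot> \<sigma> x = b" using x unfolding vertices1_def by auto
      from Cons.IH[of b'] Some p' obtain w1 y w2 where
        "w = w1 @ Inr y # w2" "y \<in> X" "ipath b' w1 (\<sigma> y)" "run (oedge S f X \<sigma>) None w2 None" by auto
      then show ?thesis using Inr b' x unfolding ipath_def edge_def
        by (intro exI[of _ "l # w1"] exI[of _ y] exI[of _ w2]) auto
    qed
  qed
qed

lemma LS_star: "loop_problem S f X \<sigma> = kleene_star Exc"
proof
  show "loop_problem S f X \<sigma> \<subseteq> kleene_star Exc"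
  proof
    fix w assume "w \<in> loop_problem S f X \<sigma>"
    then have "run (oedge S f X \<sigma>) None w None" unfolding loop_problem_def LP by auto
    then show "w \<in> kleene_star Exc"
    proof (induction w rule: length_induct)
      case (1 w)
      show ?case
      proof (cases w)
        case Nil then show ?thesis unfolding kleene_star_def by (auto intro: exI[of _ "[]"])
      next
        case (Cons l w')
        then obtain p' where p': "oedge S f X \<sigma> None l p'" "run (oedge S f X \<sigma>) p' w' None" using 1(2) by auto
        obtain x where x: "l = Inl x" "x \<in> X" "p' = Some (\<sigma> x)" using p'(1) unfolding oedge_def
          by (cases l) (auto split: option.splits, metis act1.elims option.distinct(1))
        obtain w1 y w2 where W: "w' = w1 @ Inr y # w2" "y \<in> X" "ipath (\<sigma> x) w1 (\<sigma> y)" "run (oedge S f X \<sigma>) None w2 None"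
          using split_first p'(2) x by blast
        have "w2 \<in> kleene_star Exc" using 1(1) W Cons by auto
        then obtain ws where ws: "set ws \<subseteq> Exc" "w2 = concat ws" unfolding kleene_star_def by auto
        have "Inl x # w1 @ [Inr y] \<in> Exc" unfolding Exc_def using x W by blast
        then show ?thesis unfolding kleene_star_def using ws Cons x W
          by (intro CollectI exI[of _ "(Inl x # w1 @ [Inr y]) # ws"]) auto
      qed
    qed
  qed
next
  show "kleene_star Exc \<subseteq> loop_problem S f X \<sigma>"
  proof
    fix w assume "w \<in> kleene_star Exc"
    then obtain ws where ws: "set ws \<subseteq> Exc" "w = concat ws" unfolding kleene_star_def by auto
    have "run (oedge S f X \<sigma>) None (concat ws) None" using ws(1)
      by (induction ws) (auto simp: run_append_iff dest: exc_loop)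
    then show "w \<in> loop_problem S f X \<sigma>" unfolding loop_problem_def LP vertices1_def using ws by auto
  qed
qed

end

context czsg begin

definition cls where "cls b = (if b = z then None else Some (Lc b))"

definition nstep :: "'a set option \<Rightarrow> nat + nat \<Rightarrow> 'a set option \<Rightarrow> bool" where
  "nstep s l s' \<longleftrightarrow> (case l of
     Inl x \<Rightarrow> x \<in> X \<and> (case s of None \<Rightarrow> s' = None
        | Some lc \<Rightarrow> lc \<in> \<Lambda> \<and> s' = (if qq lc \<cdot> \<sigma> x = z then None else Some (Lc (\<sigma> x))))
   | Inr x \<Rightarrow> x \<in> X \<and> (case s of None \<Rightarrow> (s' = None \<or> (\<exists>lc'. s' = Some lc' \<and> lc' \<in> \<Lambda> \<and> qq lc' \<cdot> \<sigma> x = z))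
        | Some lc \<Rightarrow> lc \<in> \<Lambda> \<and> \<sigma> x \<noteq> z \<and> lc = Lc (\<sigma> x) \<and> (\<exists>lc'. s' = Some lc' \<and> lc' \<in> \<Lambda> \<and> qq lc' \<cdot> \<sigma> x \<noteq> z)))"

lemma cls_in: "b \<in> S \<Longrightarrow> cls b \<in> insert None (Some ` \<Lambda>)"
  unfolding cls_def using Lc_in by auto

lemma nstep_sim: assumes "edge b l b'" shows "nstep (cls b) l (cls b')"
proof (cases l)
  case (Inl x)
  then have x: "x \<in> X" "b \<in> S" "b' = b \<cdot> \<sigma> x" using assms unfolding edge_def by auto
  show ?thesis
  proof (cases "b = z")
    case True then show ?thesis using x Inl unfolding nstep_def cls_def by simp
  next
    case False
    have l: "Lc b \<in> \<Lambda>" using Lc_in x False by auto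
    have zc: "b \<cdot> \<sigma> x = z \<longleftrightarrow> qq (Lc b) \<cdot> \<sigma> x = z" using zero_cond x False by simp
    show ?thesis
    proof (cases "b \<cdot> \<sigma> x = z")
      case True then show ?thesis using x Inl False l zc unfolding nstep_def cls_def by simp
    next
      case F2: False
      have "Lc (b \<cdot> \<sigma> x) = Lc (\<sigma> x)" using Lc_mult x F2 by simp
      then show ?thesis using x Inl False l zc F2 unfolding nstep_def cls_def by simp
    qed
  qed
next
  case (Inr x)
  then have x: "x \<in> X" "b' \<in> S" "b' \<cdot> \<sigma> x = b" using assms unfolding edge_def by auto
  show ?thesis
  proof (cases "b = z")
    case True
    show ?thesis
    proof (cases "b' = z")
      case True then show ?thesis using x Inr \<open>b = z\<close> unfolding nstep_def cls_def by simp
    next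
      case False
      have "Lc b' \<in> \<Lambda>" using Lc_in x False by auto
      moreover have "qq (Lc b') \<cdot> \<sigma> x = z" using zero_cond[of b' "\<sigma> x"] x False \<open>b = z\<close> by simp
      ultimately show ?thesis using x Inr \<open>b = z\<close> False unfolding nstep_def cls_def by simp
    qed
  next
    case False
    have b'z: "b' \<noteq> z" using nzl[of b' "\<sigma> x"] x False by auto
    have sz: "\<sigma> x \<noteq> z" using nzr[of b' "\<sigma> x"] x False by auto
    have "Lc b = Lc (\<sigma> x)" using Lc_mult[of b' "\<sigma> x"] x False by simp
    moreover have "Lc b \<in> \<Lambda>" "Lc b' \<in> \<Lambda>" using Lc_in x False b'z edge_S[OF assms] by auto
    moreover have "qq (Lc b') \<cdot> \<sigma> x \<noteq> z" using zero_cond[of b' "\<sigma> x"] x False b'z by simp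
    ultimately show ?thesis using x Inr False b'z sz unfolding nstep_def cls_def by auto
  qed
qed

lemma nstep_fwd: assumes "nstep s l s'" "b \<in> S" "s = cls b"
  shows "\<exists>b'. edge b l b' \<and> b' \<in> S \<and> s' = cls b'"
proof (cases l)
  case (Inl x)
  then have x: "x \<in> X" using assms unfolding nstep_def by auto
  have "edge b l (b \<cdot> \<sigma> x)" using Inl x assms unfolding edge_def by auto
  moreover have "s' = cls (b \<cdot> \<sigma> x)"
  proof -
    have "nstep s l (cls (b \<cdot> \<sigma> x))" using nstep_sim[OF \<open>edge b l (b \<cdot> \<sigma> x)\<close>] assms by simp
    moreover have "\<And>s1 s2. nstep s l s1 \<Longrightarrow> nstep s l s2 \<Longrightarrow> s1 = s2"
      using Inl unfolding nstep_def by (auto split: option.splits)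
    ultimately show ?thesis using assms(1) by blast
  qed
  ultimately show ?thesis using x assms by auto
next
  case (Inr x)
  show ?thesis
  proof (cases "b = z")
    case True
    then have s: "s = None" using assms unfolding cls_def by simp
    then have x: "x \<in> X" "s' = None \<or> (\<exists>lc'. s' = Some lc' \<and> lc' \<in> \<Lambda> \<and> qq lc' \<cdot> \<sigma> x = z)"
      using assms Inr unfolding nstep_def by auto
    from x(2) show ?thesis
    proof
      assume "s' = None"
      then show ?thesis using True x Inr unfolding edge_def cls_def by auto
    next
      assume "\<exists>lc'. s' = Some lc' \<and> lc' \<in> \<Lambda> \<and> qq lc' \<cdot> \<sigma> x = z"
      then obtain lc' where lc': "s' = Some lc'" "lc' \<in> \<Lambda>" "qq lc' \<cdot> \<sigma> x = z" by blast
      have "edge b l (qq lc')" using Inr x lc' True qq[OF lc'(2)] unfolding edge_def by auto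
      moreover have "cls (qq lc') = s'" using qq[OF lc'(2)] lc' unfolding cls_def by auto
      ultimately show ?thesis using qq[OF lc'(2)] by auto
    qed
  next
    case False
    then have s: "s = Some (Lc b)" using assms unfolding cls_def by simp
    then obtain lc' where x: "x \<in> X" "\<sigma> x \<noteq> z" "Lc b = Lc (\<sigma> x)" "s' = Some lc'" "lc' \<in> \<Lambda>" "qq lc' \<cdot> \<sigma> x \<noteq> z"
      using assms Inr unfolding nstep_def by auto
    obtain d where d: "d \<in> S" "d \<noteq> z" "Lc d = lc'" "d \<cdot> \<sigma> x = b"
      using exists_pre[OF assms(2) False _ x(3) x(5,6)] x by auto
    have "edge b l d" using Inr x d unfolding edge_def by auto
    then show ?thesis using d x unfolding cls_def by auto
  qed
qed

lemma nstep_bwd: assumes "nstep s l s'" "b' \<in> S" "s' = cls b'"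
  shows "\<exists>b. edge b l b' \<and> b \<in> S \<and> s = cls b"
proof (cases l)
  case (Inl x)
  then have x: "x \<in> X" using assms unfolding nstep_def by auto
  show ?thesis
  proof (cases s)
    case None
    then have "s' = None" using assms Inl unfolding nstep_def by auto
    then have "b' = z" using assms unfolding cls_def by (auto split: if_splits)
    then show ?thesis using None Inl x unfolding edge_def cls_def by (intro exI[of _ z]) auto
  next
    case (Some lc)
    then have lc: "lc \<in> \<Lambda>" "s' = (if qq lc \<cdot> \<sigma> x = z then None else Some (Lc (\<sigma> x)))"
      using assms Inl unfolding nstep_def by auto
    show ?thesis
    proof (cases "qq lc \<cdot> \<sigma> x = z")
      case True
      then have "b' = z" using lc assms unfolding cls_def by (auto split: if_splits)
      moreover have "cls (qq lc) = s" using qq[OF lc(1)] Some unfolding cls_def by auto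
      ultimately show ?thesis using True Inl x qq[OF lc(1)] unfolding edge_def by (intro exI[of _ "qq lc"]) auto
    next
      case False
      then have b': "b' \<noteq> z" "Lc b' = Lc (\<sigma> x)" using lc assms unfolding cls_def by (auto split: if_splits)
      obtain d where d: "d \<in> S" "d \<noteq> z" "Lc d = lc" "d \<cdot> \<sigma> x = b'"
        using exists_pre[OF assms(2) b'(1) _ b'(2) lc(1) False] x by auto
      then show ?thesis using Inl x Some unfolding edge_def cls_def by (intro exI[of _ d]) auto
    qed
  qed
next
  case (Inr x)
  show ?thesis
  proof (cases s)
    case None
    then have x: "x \<in> X" "s' = None \<or> (\<exists>lc'. s' = Some lc' \<and> lc' \<in> \<Lambda> \<and> qq lc' \<cdot> \<sigma> x = z)"
      using assms Inr unfolding nstep_def by auto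
    have "b' \<cdot> \<sigma> x = z"
    proof (cases "b' = z")
      case True then show ?thesis using x by simp
    next
      case False
      then obtain lc' where "s' = Some lc'" "qq lc' \<cdot> \<sigma> x = z" using x assms unfolding cls_def by auto
      then show ?thesis using zero_cond[of b' "\<sigma> x"] False assms x unfolding cls_def by auto
    qed
    then show ?thesis using None Inr x assms unfolding edge_def cls_def by (intro exI[of _ z]) auto
  next
    case (Some lc)
    then obtain lc' where x: "x \<in> X" "lc \<in> \<Lambda>" "\<sigma> x \<noteq> z" "lc = Lc (\<sigma> x)" "s' = Some lc'" "lc' \<in> \<Lambda>" "qq lc' \<cdot> \<sigma> x \<noteq> z"
      using assms Inr unfolding nstep_def by auto
    have b': "b' \<noteq> z" "Lc b' = lc'" using x assms unfolding cls_def by (auto split: if_splits)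
    have nz: "b' \<cdot> \<sigma> x \<noteq> z" using zero_cond[of b' "\<sigma> x"] b' x assms by auto
    have "Lc (b' \<cdot> \<sigma> x) = Lc (\<sigma> x)" using Lc_mult nz x assms by auto
    then show ?thesis using Inr x Some nz assms unfolding edge_def cls_def by (intro exI[of _ "b' \<cdot> \<sigma> x"]) auto
  qed
qed

definition Rz :: "(bool \<times> 'a set option) st \<Rightarrow> nat + nat \<Rightarrow> (bool \<times> 'a set option) st \<Rightarrow> bool" where
  "Rz p l p' \<longleftrightarrow> (p = St \<and> (\<exists>x\<in>X. l = Inl x \<and> p' = Q (\<sigma> x = z, cls (\<sigma> x))))
    \<or> (\<exists>ph s s'. p = Q (ph, s) \<and> p' = Q (ph \<or> s' = None, s') \<and> nstep s l s')
    \<or> (\<exists>s y. p = Q (True, s) \<and> y \<in> X \<and> l = Inr y \<and> s = cls (\<sigma> y) \<and> p' = Fi)"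

lemma nstep_dom: assumes "nstep s l s'"
  shows "s \<in> insert None (Some ` \<Lambda>)" "s' \<in> insert None (Some ` \<Lambda>)" "l \<in> Inl ` X \<union> Inr ` X"
proof -
  show "l \<in> Inl ` X \<union> Inr ` X" using assms unfolding nstep_def by (cases l) auto
  show "s \<in> insert None (Some ` \<Lambda>)" using assms unfolding nstep_def by (cases l; cases s) auto
  show "s' \<in> insert None (Some ` \<Lambda>)"
  proof (cases l)
    case (Inl x)
    show ?thesis
    proof (cases s)
      case None then show ?thesis using assms Inl unfolding nstep_def by simp
    next
      case (Some lc)
      then have lc: "lc \<in> \<Lambda>" "x \<in> X" "s' = (if qq lc \<cdot> \<sigma> x = z then None else Some (Lc (\<sigma> x)))"
        using assms Inl unfolding nstep_def by auto
      show ?thesis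
      proof (cases "qq lc \<cdot> \<sigma> x = z")
        case True then show ?thesis using lc by simp
      next
        case False
        then have "\<sigma> x \<noteq> z" using nzr[OF qq(1)[OF lc(1)] \<sigma>S[OF lc(2)]] by simp
        then have "Lc (\<sigma> x) \<in> \<Lambda>" using Lc_in lc(2) by simp
        then show ?thesis using lc False by simp
      qed
    qed
  next
    case (Inr x)
    then show ?thesis using assms unfolding nstep_def by (cases s) auto
  qed
qed

lemma Rz_fin: "finite {(p, a, p'). Rz p a p'}"
proof -
  define D where "D = insert None (Some ` \<Lambda>)"
  define Q0 where "Q0 = {St, Fi} \<union> Q ` ((UNIV :: bool set) \<times> D)"
  have fD: "finite D" unfolding D_def using fin\<Lambda> by simp
  have fQ: "finite Q0" unfolding Q0_def using fD by simp
  have "{(p, a, p'). Rz p a p'} \<subseteq> Q0 \<times> (Inl ` X \<union> Inr ` X) \<times> Q0"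
  proof (rule subsetI)
    fix t assume "t \<in> {(p, a, p'). Rz p a p'}"
    then obtain p a p' where t: "t = (p, a, p')" and R: "Rz p a p'" by blast
    have "p \<in> Q0 \<and> a \<in> Inl ` X \<union> Inr ` X \<and> p' \<in> Q0"
      using R unfolding Rz_def
    proof (elim disjE exE conjE bexE)
      fix x assume "p = St" "x \<in> X" "a = Inl x" "p' = Q (\<sigma> x = z, cls (\<sigma> x))"
      then show ?thesis unfolding Q0_def D_def using cls_in[of "\<sigma> x"] by auto
    next
      fix ph s s' assume "p = Q (ph, s)" "p' = Q (ph \<or> s' = None, s')" "nstep s a s'"
      then show ?thesis unfolding Q0_def D_def using nstep_dom[of s a s'] by auto
    next
      fix s y assume "p = Q (True, s)" "y \<in> X" "a = Inr y" "s = cls (\<sigma> y)" "p' = Fi"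
      then show ?thesis unfolding Q0_def D_def using cls_in[of "\<sigma> y"] by auto
    qed
    then show "t \<in> Q0 \<times> (Inl ` X \<union> Inr ` X) \<times> Q0" using t by simp
  qed
  moreover have "finite (Q0 \<times> (Inl ` X \<union> Inr ` X) \<times> Q0)" using fQ finX by simp
  ultimately show ?thesis by (rule finite_subset)
qed

lemma Rz_sound_gen: "run Rz p w Fi \<Longrightarrow>
   (p = St \<longrightarrow> w \<in> Exc) \<and> (p = Fi \<longrightarrow> w = []) \<and>
   (\<forall>s. p = Q (True, s) \<longrightarrow> (\<exists>b w' y. b \<in> S \<and> s = cls b \<and> w = w' @ [Inr y] \<and> y \<in> X \<and> run edge b w' (\<sigma> y))) \<and>
   (\<forall>s. p = Q (False, s) \<longrightarrow> (\<forall>b. b \<in> S \<and> s = cls b \<longrightarrow> (\<exists>w' y. w = w' @ [Inr y] \<and> y \<in> X \<and> run edge b w' (\<sigma> y))))"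
proof (induction p w "Fi :: (bool \<times> 'a set option) st" rule: run.induct)
  case run_nil then show ?case by simp
next
  case (run_cons p l p' w)
  from run_cons(1) show ?case unfolding Rz_def
  proof (elim disjE exE conjE bexE)
    fix x assume P: "p = St" "x \<in> X" "l = Inl x" "p' = Q (\<sigma> x = z, cls (\<sigma> x))"
    have "\<exists>w' y. w = w' @ [Inr y] \<and> y \<in> X \<and> run edge (\<sigma> x) w' (\<sigma> y)"
    proof (cases "\<sigma> x = z")
      case True
      then obtain b w' y where "b \<in> S" "cls (\<sigma> x) = cls b" "w = w' @ [Inr y]" "y \<in> X" "run edge b w' (\<sigma> y)"
        using run_cons(3) P by auto
      moreover have "b = z" using calculation True unfolding cls_def by (auto split: if_splits)
      ultimately show ?thesis using True by auto
    next
      case False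
      then show ?thesis using run_cons(3) P by auto
    qed
    then obtain w' y where "w = w' @ [Inr y]" "y \<in> X" "run edge (\<sigma> x) w' (\<sigma> y)" by blast
    then have "l # w \<in> Exc" unfolding Exc_def ipath_def using P by auto
    then show ?thesis using P by simp
  next
    fix ph s s' assume P: "p = Q (ph, s)" "p' = Q (ph \<or> s' = None, s')" "nstep s l s'"
    show ?thesis
    proof (cases ph)
      case True
      then obtain b' w' y where B: "b' \<in> S" "s' = cls b'" "w = w' @ [Inr y]" "y \<in> X" "run edge b' w' (\<sigma> y)"
        using run_cons(3) P by auto
      obtain b where "edge b l b'" "b \<in> S" "s = cls b" using nstep_bwd[OF P(3) B(1,2)] by blast
      then show ?thesis using B P True by (intro conjI allI impI; simp) (intro exI[of _ b] exI[of _ "l # w'"], auto)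
    next
      case False
      have "\<exists>w' y. l # w = w' @ [Inr y] \<and> y \<in> X \<and> run edge b w' (\<sigma> y)" if b: "b \<in> S" "s = cls b" for b
      proof -
        obtain b' where b': "edge b l b'" "b' \<in> S" "s' = cls b'" using nstep_fwd[OF P(3) b] by blast
        have "\<exists>w' y. w = w' @ [Inr y] \<and> y \<in> X \<and> run edge b' w' (\<sigma> y)"
        proof (cases "s' = None")
          case True
          then obtain b'' w' y where B: "b'' \<in> S" "s' = cls b''" "w = w' @ [Inr y]" "y \<in> X" "run edge b'' w' (\<sigma> y)"
            using run_cons(3) P by auto
          have "b'' = b'" using B(2) b'(3) True unfolding cls_def by (auto split: if_splits)
          then show ?thesis using B by auto
        next
          case F: False
          then show ?thesis using run_cons(3) P False b' by auto
        qed
        then show ?thesis using b' by auto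
      qed
      then show ?thesis using P False by auto
    qed
  next
    fix s y assume P: "p = Q (True, s)" "y \<in> X" "l = Inr y" "s = cls (\<sigma> y)" "p' = Fi"
    then have "w = []" using run_cons(3) by simp
    then show ?thesis using P by (intro conjI allI impI; simp)
  qed
qed

lemma Rz_sound: "run Rz St w Fi \<Longrightarrow> w \<in> Exc"
  using Rz_sound_gen by blast

lemma Rz_sim: "run edge b w c \<Longrightarrow> b \<in> S \<Longrightarrow>
   \<exists>ph'. run Rz (Q (ph, cls b)) w (Q (ph', cls c)) \<and> (ph \<longrightarrow> ph') \<and> (c = z \<and> w \<noteq> [] \<longrightarrow> ph')"
proof (induction b w c arbitrary: ph rule: run.induct)
  case (run_nil s) then show ?case by auto
next
  case (run_cons b l b' w c)
  have st: "nstep (cls b) l (cls b')" using nstep_sim[OF run_cons(1)] .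
  have b'S: "b' \<in> S" using edge_S[OF run_cons(1)] by simp
  define ph1 where "ph1 = (ph \<or> cls b' = None)"
  obtain ph' where IH: "run Rz (Q (ph1, cls b')) w (Q (ph', cls c))"
    "ph1 \<longrightarrow> ph'" "c = z \<and> w \<noteq> [] \<longrightarrow> ph'"
    using run_cons(3)[OF b'S, of ph1] by (elim exE conjE) simp
  have R: "Rz (Q (ph, cls b)) l (Q (ph1, cls b'))" unfolding Rz_def ph1_def using st by blast
  have "c = z \<longrightarrow> ph'"
  proof
    assume "c = z"
    show ph'
    proof (cases "w = []")
      case True
      then have "b' = c" using run_cons(2) by simp
      then have "cls b' = None" using \<open>c = z\<close> unfolding cls_def by simp
      then show ph' using IH unfolding ph1_def by simp
    next
      case False then show ph' using IH \<open>c = z\<close> by simp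
    qed
  qed
  then show ?case using R IH unfolding ph1_def by auto
qed

lemma Rz_complete: assumes "x \<in> X" "y \<in> X" "run edge (\<sigma> x) w1 z" "run edge z w2 (\<sigma> y)"
  shows "run Rz St (Inl x # w1 @ w2 @ [Inr y]) Fi"
proof -
  have R0: "Rz St (Inl x) (Q (\<sigma> x = z, cls (\<sigma> x)))" unfolding Rz_def using assms by auto
  obtain ph1 where P1: "run Rz (Q (\<sigma> x = z, cls (\<sigma> x))) w1 (Q (ph1, cls z))"
    "\<sigma> x = z \<longrightarrow> ph1" "w1 \<noteq> [] \<longrightarrow> ph1"
    using Rz_sim[OF assms(3), of "\<sigma> x = z"] assms by auto
  have ph1 using P1 assms(3) by (cases "w1 = []") auto
  obtain ph2 where P2: "run Rz (Q (ph1, cls z)) w2 (Q (ph2, cls (\<sigma> y)))" "ph1 \<longrightarrow> ph2"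
    using Rz_sim[OF assms(4), of ph1] by auto
  have R3: "Rz (Q (True, cls (\<sigma> y))) (Inr y) Fi" unfolding Rz_def using assms by auto
  show ?thesis using R0 P1(1) P2 \<open>ph1\<close> R3 by (auto simp: run_append_iff)
qed

end

context czsg begin

definition \<alpha> where "\<alpha> x = (SOME a. a \<in> S \<and> e \<cdot> a = a \<and> a \<cdot> \<sigma> x \<noteq> z)"
definition \<beta> where "\<beta> x = (SOME t. t \<in> S \<and> t \<cdot> (\<alpha> x \<cdot> \<sigma> x) = \<sigma> x)"
definition Rin where "Rin x b \<longleftrightarrow> b = \<sigma> x \<or> (\<exists>t\<in>S. b = \<sigma> x \<cdot> t)"
definition \<psi> where "\<psi> x b = \<alpha> x \<cdot> b \<cdot> qq' (Lc b)"
definition tt where "tt x = \<psi> x (\<sigma> x)"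
definition TT where "TT x y = \<psi> x (\<sigma> y)"

lemma \<alpha>_ex: assumes "x \<in> X" "\<sigma> x \<noteq> z" shows "\<exists>a. a \<in> S \<and> e \<cdot> a = a \<and> a \<cdot> \<sigma> x \<noteq> z"
proof -
  obtain u v where uv: "u \<in> S" "v \<in> S" "e = u \<cdot> \<sigma> x \<cdot> v" using SaS[of "\<sigma> x" e] assms eS by auto
  have "e = e \<cdot> e" using ee by simp
  also have "\<dots> = e \<cdot> (u \<cdot> \<sigma> x \<cdot> v)" using uv(3) by metis
  also have "\<dots> = (e \<cdot> u) \<cdot> \<sigma> x \<cdot> v" using uv assms eS by (simp add: as)
  finally have E: "e = (e \<cdot> u) \<cdot> \<sigma> x \<cdot> v" .
  have "(e \<cdot> u) \<cdot> \<sigma> x \<noteq> z"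
  proof
    assume "(e \<cdot> u) \<cdot> \<sigma> x = z" then have "e = z" using E uv by simp
    then show False using ez by simp
  qed
  moreover have "e \<cdot> (e \<cdot> u) = e \<cdot> u" using ee eS uv by (metis as)
  ultimately show ?thesis using eS uv by (intro exI[of _ "e \<cdot> u"]) auto
qed

lemma \<alpha>: assumes "x \<in> X" "\<sigma> x \<noteq> z" shows "\<alpha> x \<in> S" "e \<cdot> \<alpha> x = \<alpha> x" "\<alpha> x \<cdot> \<sigma> x \<noteq> z"
  using someI_ex[OF \<alpha>_ex[OF assms]] unfolding \<alpha>_def[symmetric] by auto

lemma \<beta>: assumes "x \<in> X" "\<sigma> x \<noteq> z" shows "\<beta> x \<in> S" "\<beta> x \<cdot> (\<alpha> x \<cdot> \<sigma> x) = \<sigma> x"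
proof -
  obtain t where t: "t \<in> S" "\<sigma> x = t \<cdot> \<alpha> x \<cdot> \<sigma> x" using F1'[of "\<alpha> x" "\<sigma> x"] \<alpha>[OF assms] assms by auto
  have "t \<cdot> (\<alpha> x \<cdot> \<sigma> x) = \<sigma> x" using t(1) \<alpha>(1)[OF assms] assms(1) as[of t "\<alpha> x" "\<sigma> x"] t(2) by simp
  then have "\<exists>t. t \<in> S \<and> t \<cdot> (\<alpha> x \<cdot> \<sigma> x) = \<sigma> x" using t(1) by blast
  from someI_ex[OF this] show "\<beta> x \<in> S" "\<beta> x \<cdot> (\<alpha> x \<cdot> \<sigma> x) = \<sigma> x" unfolding \<beta>_def[symmetric] by auto
qed

lemma Rin_S: "x \<in> X \<Longrightarrow> Rin x b \<Longrightarrow> b \<in> S"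
  unfolding Rin_def by auto

lemma \<beta>\<alpha>: assumes "x \<in> X" "\<sigma> x \<noteq> z" "Rin x b" shows "\<beta> x \<cdot> (\<alpha> x \<cdot> b) = b"
proof -
  note A = \<alpha>[OF assms(1,2)] \<beta>[OF assms(1,2)]
  have 1: "\<beta> x \<cdot> (\<alpha> x \<cdot> \<sigma> x) = \<sigma> x" using A(5) .
  show ?thesis
  proof (cases "b = \<sigma> x")
    case True then show ?thesis using 1 by simp
  next
    case False
    then obtain t where t: "t \<in> S" "b = \<sigma> x \<cdot> t" using assms unfolding Rin_def by auto
    have "\<beta> x \<cdot> (\<alpha> x \<cdot> (\<sigma> x \<cdot> t)) = (\<beta> x \<cdot> (\<alpha> x \<cdot> \<sigma> x)) \<cdot> t"
      using A(1) A(4) t(1) assms(1) by (simp add: as)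
    also have "\<dots> = \<sigma> x \<cdot> t" using 1 by simp
    finally show ?thesis using t(2) by simp
  qed
qed

lemma \<alpha>b_nz: assumes "x \<in> X" "\<sigma> x \<noteq> z" "Rin x b" "b \<noteq> z" shows "\<alpha> x \<cdot> b \<noteq> z"
proof
  assume "\<alpha> x \<cdot> b = z"
  then have "b = z" using \<beta>\<alpha>[OF assms(1-3)] \<beta>[OF assms(1,2)] by simp
  then show False using assms by simp
qed

lemma \<psi>_G: assumes "x \<in> X" "\<sigma> x \<noteq> z" "Rin x b" "b \<noteq> z" shows "\<psi> x b \<in> Ge e"
proof -
  have bS: "b \<in> S" using Rin_S assms by simp
  note A = \<alpha>[OF assms(1,2)]
  have nz: "\<alpha> x \<cdot> b \<noteq> z" using \<alpha>b_nz assms by simp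
  have L: "Lc (\<alpha> x \<cdot> b) = Lc b" using Lc_mult A bS nz by simp
  have "e \<cdot> (\<alpha> x \<cdot> b) = \<alpha> x \<cdot> b" using A bS eS by (metis as)
  from inG(1)[of "\<alpha> x \<cdot> b"] this nz A bS L show ?thesis unfolding \<psi>_def by simp
qed

lemma \<psi>_fwd: assumes "x \<in> X" "\<sigma> x \<noteq> z" "b \<in> S" "b \<noteq> z" "x' \<in> X" "b \<cdot> \<sigma> x' \<noteq> z"
  shows "\<psi> x (b \<cdot> \<sigma> x') = \<psi> x b \<cdot> gg (Lc b) x'"
proof -
  note A = \<alpha>[OF assms(1,2)]
  have l: "Lc b \<in> \<Lambda>" using Lc_in assms by simp
  have sz: "\<sigma> x' \<noteq> z" using nzr[of b "\<sigma> x'"] assms by simp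
  have l': "Lc (\<sigma> x') \<in> \<Lambda>" using Lc_in assms sz by simp
  have L: "Lc (b \<cdot> \<sigma> x') = Lc (\<sigma> x')" using Lc_mult assms by simp
  have rid: "b \<cdot> qq' (Lc b) \<cdot> qq (Lc b) = b" using qq_rid[OF l] Lc_self assms by simp
  have "\<psi> x (b \<cdot> \<sigma> x') = \<alpha> x \<cdot> (b \<cdot> qq' (Lc b) \<cdot> qq (Lc b)) \<cdot> \<sigma> x' \<cdot> qq' (Lc (\<sigma> x'))"
    unfolding \<psi>_def L rid using A assms by (simp add: as)
  also have "\<dots> = \<psi> x b \<cdot> gg (Lc b) x'" unfolding \<psi>_def gg_def
    using A assms qq(1)[OF l] qq'(1)[OF l] qq'(1)[OF l'] by (simp add: as)
  finally show ?thesis .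
qed

lemma \<psi>_inj: assumes "x \<in> X" "\<sigma> x \<noteq> z" "Rin x b" "Rin x b'" "b \<noteq> z" "b' \<noteq> z" "Lc b = Lc b'"
  "\<psi> x b = \<psi> x b'" shows "b = b'"
proof -
  note A = \<alpha>[OF assms(1,2)]
  have bS: "b \<in> S" "b' \<in> S" using Rin_S assms by auto
  have l: "Lc b \<in> \<Lambda>" using Lc_in bS assms by simp
  have "\<alpha> x \<cdot> b \<in> Lc b" unfolding Lc_def using A by auto
  then have r1: "\<alpha> x \<cdot> b \<cdot> qq' (Lc b) \<cdot> qq (Lc b) = \<alpha> x \<cdot> b" using qq_rid[OF l] by simp
  have "\<alpha> x \<cdot> b' \<in> Lc b'" unfolding Lc_def using A by auto
  then have "\<alpha> x \<cdot> b' \<in> Lc b" using assms(7) by simp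
  then have r2: "\<alpha> x \<cdot> b' \<cdot> qq' (Lc b) \<cdot> qq (Lc b) = \<alpha> x \<cdot> b'" using qq_rid[OF l] by simp
  have "\<alpha> x \<cdot> b = \<alpha> x \<cdot> b'" using r1 r2 assms(7,8) unfolding \<psi>_def by metis
  then show ?thesis using \<beta>\<alpha>[OF assms(1,2,3)] \<beta>\<alpha>[OF assms(1,2,4)] by metis
qed

lemma Rin_fwd: assumes "x \<in> X" "Rin x b" "x' \<in> X" shows "Rin x (b \<cdot> \<sigma> x')"
proof (cases "b = \<sigma> x")
  case True then show ?thesis using assms unfolding Rin_def by auto
next
  case False
  then obtain t where t: "t \<in> S" "b = \<sigma> x \<cdot> t" using assms unfolding Rin_def by auto
  have "b \<cdot> \<sigma> x' = \<sigma> x \<cdot> (t \<cdot> \<sigma> x')" using t assms as[of "\<sigma> x" t "\<sigma> x'"] by simp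
  moreover have "t \<cdot> \<sigma> x' \<in> S" using t assms by simp
  ultimately show ?thesis unfolding Rin_def by blast
qed

lemma Rin_bwd: assumes "x \<in> X" "c \<in> S" "x' \<in> X" "c \<cdot> \<sigma> x' = b" "b \<noteq> z" "Rin x b" shows "Rin x c"
proof -
  obtain t where t: "t \<in> S" "c = c \<cdot> \<sigma> x' \<cdot> t" using F1[of c "\<sigma> x'"] assms by auto
  have cb: "c = b \<cdot> t" using t assms by simp
  show ?thesis
  proof (cases "b = \<sigma> x")
    case True then show ?thesis using cb t unfolding Rin_def by auto
  next
    case False
    then obtain t0 where "t0 \<in> S" "b = \<sigma> x \<cdot> t0" using assms unfolding Rin_def by auto
    then have "c = \<sigma> x \<cdot> (t0 \<cdot> t)" using cb t assms by (simp add: as)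
    then show ?thesis using t \<open>t0 \<in> S\<close> unfolding Rin_def by auto
  qed
qed

lemma gg_G: assumes "lc \<in> \<Lambda>" "x' \<in> X" "qq lc \<cdot> \<sigma> x' \<noteq> z" shows "gg lc x' \<in> Ge e"
proof -
  note Q = qq[OF assms(1)]
  have sz: "\<sigma> x' \<noteq> z" using nzr[of "qq lc" "\<sigma> x'"] Q assms by simp
  have L: "Lc (qq lc \<cdot> \<sigma> x') = Lc (\<sigma> x')" using Lc_mult Q assms by simp
  have "e \<cdot> (qq lc \<cdot> \<sigma> x') = qq lc \<cdot> \<sigma> x'" using Q eS assms by (metis as \<sigma>S)
  from inG(1)[of "qq lc \<cdot> \<sigma> x'"] this Q assms L show ?thesis unfolding gg_def by simp
qed

lemma gg_SG: "lc \<in> \<Lambda> \<Longrightarrow> x' \<in> X \<Longrightarrow> qq lc \<cdot> \<sigma> x' \<noteq> z \<Longrightarrow> gg lc x' \<in> SG"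
  using gg_G unfolding SG_def by blast

lemma G_cancel: assumes "a \<in> Ge e" "b \<in> Ge e" "g \<in> Ge e" "a \<cdot> g = b \<cdot> g" shows "a = b"
proof -
  obtain g' where g': "g' \<in> Ge e" "g \<cdot> g' = e" using Ge_inv[OF eS ee ez assms(3)] by blast
  have S: "a \<in> S" "b \<in> S" "g \<in> S" "g' \<in> S" "a \<cdot> e = a" "b \<cdot> e = b"
    using assms g' unfolding Ge_def by auto
  have "a = a \<cdot> (g \<cdot> g')" using S g' by simp
  also have "\<dots> = (a \<cdot> g) \<cdot> g'" using S by (simp add: as)
  also have "\<dots> = (b \<cdot> g) \<cdot> g'" using assms by simp
  also have "\<dots> = b" using S g' by (simp add: as)
  finally show ?thesis .
qed

end

context czsg begin

definition Gens where
  "Gens = SG \<union> ((tt ` {x\<in>X. \<sigma> x \<noteq> z} \<union> (\<lambda>(x,y). TT x y) ` (X \<times> X)) \<inter> Ge e)"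

lemma finGens: "finite Gens" unfolding Gens_def using finSG finX by auto
lemma Gens_G: "Gens \<subseteq> Ge e" unfolding Gens_def SG_def by auto

lemma tt_G: "x \<in> X \<Longrightarrow> \<sigma> x \<noteq> z \<Longrightarrow> tt x \<in> Ge e"
  unfolding tt_def using \<psi>_G[of x "\<sigma> x"] unfolding Rin_def by auto
lemma tt_Gens: "x \<in> X \<Longrightarrow> \<sigma> x \<noteq> z \<Longrightarrow> tt x \<in> Gens"
  using tt_G unfolding Gens_def by auto
lemma TT_G: "x \<in> X \<Longrightarrow> \<sigma> x \<noteq> z \<Longrightarrow> Rin x (\<sigma> y) \<Longrightarrow> \<sigma> y \<noteq> z \<Longrightarrow> TT x y \<in> Ge e"
  unfolding TT_def using \<psi>_G by auto
lemma TT_Gens: "x \<in> X \<Longrightarrow> y \<in> X \<Longrightarrow> \<sigma> x \<noteq> z \<Longrightarrow> Rin x (\<sigma> y) \<Longrightarrow> \<sigma> y \<noteq> z \<Longrightarrow> TT x y \<in> Gens"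
  using TT_G unfolding Gens_def by auto
lemma gg_Gens: "lc \<in> \<Lambda> \<Longrightarrow> x' \<in> X \<Longrightarrow> qq lc \<cdot> \<sigma> x' \<noteq> z \<Longrightarrow> gg lc x' \<in> Gens"
  using gg_SG unfolding Gens_def by auto

definition gedge :: "(nat \<Rightarrow> 'a) \<Rightarrow> nat set \<Rightarrow> 'a \<Rightarrow> nat + nat \<Rightarrow> 'a \<Rightarrow> bool" where
  "gedge \<tau> Y h l h' \<longleftrightarrow> (case l of Inl j \<Rightarrow> j \<in> Y \<and> h \<in> Ge e \<and> h' = h \<cdot> \<tau> j
      | Inr j \<Rightarrow> j \<in> Y \<and> h' \<in> Ge e \<and> h' \<cdot> \<tau> j = h)"

definition \<pi> where "\<pi> p = (case p of None \<Rightarrow> e | Some h \<Rightarrow> h)"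

lemma eG: "e \<in> Ge e" unfolding Ge_def using eS ee ez by auto

lemma proj: assumes tY: "\<forall>j\<in>Y. \<tau> j \<in> Ge e" and r: "run (oedge (Ge e) f Y \<tau>) p w q"
  shows "run (gedge \<tau> Y) (\<pi> p) w (\<pi> q)"
proof -
  have "\<exists>s'. run (gedge \<tau> Y) (\<pi> p) w s' \<and> s' = \<pi> q"
  proof (rule run_sim[OF r, of "\<lambda>p h. h = \<pi> p"])
    show "\<pi> p = \<pi> p" ..
  next
    fix b l b' s assume E: "oedge (Ge e) f Y \<tau> b l b'" and s: "s = \<pi> b"
    show "\<exists>s'. gedge \<tau> Y s l s' \<and> s' = \<pi> b'"
    proof (cases l)
      case (Inl j)
      then have j: "j \<in> Y" "b' = act1 f b (\<tau> j)" "b \<in> vertices1 (Ge e)" using E unfolding oedge_def by auto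
      have tj: "\<tau> j \<in> Ge e" "e \<cdot> \<tau> j = \<tau> j" using tY j unfolding Ge_def by auto
      show ?thesis
      proof (cases b)
        case None then show ?thesis using j tj s Inl eG unfolding gedge_def \<pi>_def by auto
      next
        case (Some h) then show ?thesis using j tj s Inl unfolding gedge_def \<pi>_def vertices1_def by auto
      qed
    next
      case (Inr j)
      then have j: "j \<in> Y" "act1 f b' (\<tau> j) = b" "b' \<in> vertices1 (Ge e)" using E unfolding oedge_def by auto
      have tj: "\<tau> j \<in> Ge e" "e \<cdot> \<tau> j = \<tau> j" using tY j unfolding Ge_def by auto
      show ?thesis
      proof (cases b')
        case None then show ?thesis using j tj s Inr eG unfolding gedge_def \<pi>_def by auto
      next
        case (Some h) then show ?thesis using j tj s Inr unfolding gedge_def \<pi>_def vertices1_def by auto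
      qed
    qed
  qed
  then show ?thesis by simp
qed

definition Rnz :: "'a list \<Rightarrow> (nat \<times> 'a set) st \<Rightarrow> (nat + nat) \<times> (nat + nat) \<Rightarrow> (nat \<times> 'a set) st \<Rightarrow> bool" where
  "Rnz gs p ab p' \<longleftrightarrow>
    (p = St \<and> (\<exists>x\<in>X. \<sigma> x \<noteq> z \<and> ab = (Inl (idx gs (tt x)), Inl x) \<and> p' = Q (x, Lc (\<sigma> x))))
  \<or> (\<exists>x lc. p = Q (x, lc) \<and> x \<in> X \<and> \<sigma> x \<noteq> z \<and> lc \<in> \<Lambda> \<and>
      ((\<exists>x'\<in>X. qq lc \<cdot> \<sigma> x' \<noteq> z \<and> ab = (Inl (idx gs (gg lc x')), Inl x') \<and> p' = Q (x, Lc (\<sigma> x')))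
     \<or> (\<exists>x'\<in>X. \<exists>lc'\<in>\<Lambda>. \<sigma> x' \<noteq> z \<and> lc = Lc (\<sigma> x') \<and> qq lc' \<cdot> \<sigma> x' \<noteq> z \<and>
           ab = (Inr (idx gs (gg lc' x')), Inr x') \<and> p' = Q (x, lc'))
     \<or> (\<exists>y\<in>X. \<sigma> y \<noteq> z \<and> lc = Lc (\<sigma> y) \<and> Rin x (\<sigma> y) \<and> ab = (Inr (idx gs (TT x y)), Inr y) \<and> p' = Fi)))"

lemma Rnz_fin: "finite {(p, a, b, p'). Rnz gs p (a, b) p'}"
proof -
  define Q0 where "Q0 = {St, Fi} \<union> Q ` (X \<times> \<Lambda>)"
  define A where "A = Inl ` idx gs ` (tt ` X \<union> (\<lambda>(lc,x). gg lc x) ` (\<Lambda> \<times> X))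
      \<union> Inr ` idx gs ` ((\<lambda>(lc,x). gg lc x) ` (\<Lambda> \<times> X) \<union> (\<lambda>(x,y). TT x y) ` (X \<times> X))"
  define B where "B = Inl ` X \<union> Inr ` X"
  have fin: "finite (Q0 \<times> A \<times> B \<times> Q0)" unfolding Q0_def A_def B_def using finX fin\<Lambda> by simp
  have "{(p, a, b, p'). Rnz gs p (a, b) p'} \<subseteq> Q0 \<times> A \<times> B \<times> Q0"
  proof (rule subsetI)
    fix t assume "t \<in> {(p, a, b, p'). Rnz gs p (a, b) p'}"
    then obtain p a b p' where t: "t = (p, a, b, p')" and R: "Rnz gs p (a, b) p'" by blast
    have "p \<in> Q0 \<and> a \<in> A \<and> b \<in> B \<and> p' \<in> Q0"
      using R unfolding Rnz_def
    proof (elim disjE exE conjE bexE)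
      fix x assume "p = St" "x \<in> X" "(a, b) = (Inl (idx gs (tt x)), Inl x)" "p' = Q (x, Lc (\<sigma> x))" "\<sigma> x \<noteq> z"
      then show ?thesis unfolding Q0_def A_def B_def using Lc_in[of "\<sigma> x"] by auto
    next
      fix x lc x' assume "p = Q (x, lc)" "x \<in> X" "lc \<in> \<Lambda>" "x' \<in> X" "qq lc \<cdot> \<sigma> x' \<noteq> z"
        "(a, b) = (Inl (idx gs (gg lc x')), Inl x')" "p' = Q (x, Lc (\<sigma> x'))"
      moreover have "\<sigma> x' \<noteq> z" using calculation nzr[OF qq(1) \<sigma>S] by blast
      ultimately show ?thesis unfolding Q0_def A_def B_def using Lc_in[of "\<sigma> x'"] by auto
    next
      fix x lc x' lc' assume "p = Q (x, lc)" "x \<in> X" "lc \<in> \<Lambda>" "x' \<in> X" "lc' \<in> \<Lambda>"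
        "(a, b) = (Inr (idx gs (gg lc' x')), Inr x')" "p' = Q (x, lc')"
      then show ?thesis unfolding Q0_def A_def B_def by auto
    next
      fix x lc y assume "p = Q (x, lc)" "x \<in> X" "lc \<in> \<Lambda>" "y \<in> X"
        "(a, b) = (Inr (idx gs (TT x y)), Inr y)" "p' = Fi"
      moreover have "TT x y \<in> (\<lambda>(x,y). TT x y) ` (X \<times> X)" using calculation by force
      ultimately show ?thesis unfolding Q0_def A_def B_def by auto
    qed
    then show "t \<in> Q0 \<times> A \<times> B \<times> Q0" using t by simp
  qed
  then show ?thesis using fin finite_subset by blast
qed

lemma Rnz_sound_gen:
  assumes gs: "set gs = Gens"
  shows "run (Rnz gs) p ls Fi \<Longrightarrow>
   (p = Fi \<longrightarrow> ls = []) \<and>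
   (\<forall>x lc b. p = Q (x, lc) \<longrightarrow> b \<noteq> z \<longrightarrow> Rin x b \<longrightarrow> Lc b = lc \<longrightarrow>
       run (gedge (\<lambda>i. gs ! i) {..<length gs}) (\<psi> x b) (map fst ls) e \<longrightarrow>
       (\<exists>w y. map snd ls = w @ [Inr y] \<and> y \<in> X \<and> run edge b w (\<sigma> y))) \<and>
   (p = St \<longrightarrow> run (gedge (\<lambda>i. gs ! i) {..<length gs}) e (map fst ls) e \<longrightarrow> map snd ls \<in> Exc)"
proof (induction p ls "Fi :: (nat \<times> 'a set) st" rule: run.induct)
  case run_nil then show ?case by simp
next
  case (run_cons p ab p' ls)
  let ?ge = "gedge (\<lambda>i. gs ! i) {..<length gs}"
  have ix: "gs ! idx gs g = g" if "g \<in> Gens" for g using idx(2)[of g gs] gs that by simp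
  from run_cons(1) show ?case unfolding Rnz_def
  proof (elim disjE exE conjE bexE)
    fix x assume P: "p = St" "x \<in> X" "\<sigma> x \<noteq> z" "ab = (Inl (idx gs (tt x)), Inl x)" "p' = Q (x, Lc (\<sigma> x))"
    have "map snd (ab # ls) \<in> Exc" if r: "run ?ge e (map fst (ab # ls)) e"
    proof -
      from r P obtain h1 where h1: "?ge e (Inl (idx gs (tt x))) h1" "run ?ge h1 (map fst ls) e" by auto
      have "h1 = tt x" using h1(1) ix[OF tt_Gens[OF P(2,3)]] tt_G[OF P(2,3)] unfolding gedge_def Ge_def by auto
      then have "run ?ge (\<psi> x (\<sigma> x)) (map fst ls) e" using h1(2) unfolding tt_def by simp
      moreover have "Rin x (\<sigma> x)" unfolding Rin_def by simp
      ultimately obtain w y where "map snd ls = w @ [Inr y]" "y \<in> X" "run edge (\<sigma> x) w (\<sigma> y)"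
        using run_cons(3) P by blast
      then show ?thesis unfolding Exc_def ipath_def using P by auto
    qed
    then show ?thesis using P by simp
  next
    fix x lc x' assume P: "p = Q (x, lc)" "x \<in> X" "\<sigma> x \<noteq> z" "lc \<in> \<Lambda>" "x' \<in> X" "qq lc \<cdot> \<sigma> x' \<noteq> z"
      "ab = (Inl (idx gs (gg lc x')), Inl x')" "p' = Q (x, Lc (\<sigma> x'))"
    have "\<exists>w y. map snd (ab # ls) = w @ [Inr y] \<and> y \<in> X \<and> run edge b w (\<sigma> y)"
      if b: "b \<noteq> z" "Rin x b" "Lc b = lc" "run ?ge (\<psi> x b) (map fst (ab # ls)) e" for b
    proof -
      have bS: "b \<in> S" using Rin_S b P by simp
      from b(4) P obtain h1 where h1: "?ge (\<psi> x b) (Inl (idx gs (gg lc x'))) h1" "run ?ge h1 (map fst ls) e" by auto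
      have nz: "b \<cdot> \<sigma> x' \<noteq> z" using zero_cond[of b "\<sigma> x'"] bS b P by simp
      have "h1 = \<psi> x b \<cdot> gg lc x'" using h1(1) ix[OF gg_Gens[OF P(4,5,6)]] unfolding gedge_def by auto
      also have "\<dots> = \<psi> x (b \<cdot> \<sigma> x')" using \<psi>_fwd[of x b x'] P bS b nz by simp
      finally have "run ?ge (\<psi> x (b \<cdot> \<sigma> x')) (map fst ls) e" using h1(2) by simp
      moreover have "Rin x (b \<cdot> \<sigma> x')" using Rin_fwd P b by simp
      moreover have "Lc (b \<cdot> \<sigma> x') = Lc (\<sigma> x')" using Lc_mult bS P nz by simp
      ultimately obtain w y where "map snd ls = w @ [Inr y]" "y \<in> X" "run edge (b \<cdot> \<sigma> x') w (\<sigma> y)"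
        using run_cons(3) P nz by blast
      moreover have "edge b (Inl x') (b \<cdot> \<sigma> x')" unfolding edge_def using P bS by simp
      ultimately show ?thesis using P by (intro exI[of _ "Inl x' # w"] exI[of _ y]) auto
    qed
    then show ?thesis using P by auto
  next
    fix x lc x' lc' assume P: "p = Q (x, lc)" "x \<in> X" "\<sigma> x \<noteq> z" "lc \<in> \<Lambda>" "x' \<in> X" "lc' \<in> \<Lambda>"
      "\<sigma> x' \<noteq> z" "lc = Lc (\<sigma> x')" "qq lc' \<cdot> \<sigma> x' \<noteq> z"
      "ab = (Inr (idx gs (gg lc' x')), Inr x')" "p' = Q (x, lc')"
    have "\<exists>w y. map snd (ab # ls) = w @ [Inr y] \<and> y \<in> X \<and> run edge b w (\<sigma> y)"
      if b: "b \<noteq> z" "Rin x b" "Lc b = lc" "run ?ge (\<psi> x b) (map fst (ab # ls)) e" for b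
    proof -
      have bS: "b \<in> S" using Rin_S b P by simp
      from b(4) P obtain h1 where h1: "?ge (\<psi> x b) (Inr (idx gs (gg lc' x'))) h1" "run ?ge h1 (map fst ls) e" by auto
      have h1G: "h1 \<in> Ge e" "h1 \<cdot> gg lc' x' = \<psi> x b" using h1(1) ix[OF gg_Gens[OF P(6,5,9)]] unfolding gedge_def by auto
      obtain d where d: "d \<in> S" "d \<noteq> z" "Lc d = lc'" "d \<cdot> \<sigma> x' = b"
        using exists_pre[of b "\<sigma> x'" lc'] bS b P by auto
      have dR: "Rin x d" using Rin_bwd[of x d x' b] d P b by simp
      have "\<psi> x d \<cdot> gg lc' x' = \<psi> x b" using \<psi>_fwd[of x d x'] d P b by simp
      then have "\<psi> x d = h1" using G_cancel[of "\<psi> x d" h1 "gg lc' x'"] h1G \<psi>_G[of x d] dR d P gg_G[OF P(6,5,9)] by simp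
      then obtain w y where "map snd ls = w @ [Inr y]" "y \<in> X" "run edge d w (\<sigma> y)"
        using run_cons(3) P h1(2) d dR by blast
      moreover have "edge b (Inr x') d" unfolding edge_def using P d by simp
      ultimately show ?thesis using P by (intro exI[of _ "Inr x' # w"] exI[of _ y]) auto
    qed
    then show ?thesis using P by auto
  next
    fix x lc y assume P: "p = Q (x, lc)" "x \<in> X" "\<sigma> x \<noteq> z" "lc \<in> \<Lambda>" "y \<in> X" "\<sigma> y \<noteq> z"
      "lc = Lc (\<sigma> y)" "Rin x (\<sigma> y)" "ab = (Inr (idx gs (TT x y)), Inr y)" "p' = Fi"
    have ls: "ls = []" using run_cons(3) P by simp
    have "\<exists>w y'. map snd (ab # ls) = w @ [Inr y'] \<and> y' \<in> X \<and> run edge b w (\<sigma> y')"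
      if b: "b \<noteq> z" "Rin x b" "Lc b = lc" "run ?ge (\<psi> x b) (map fst (ab # ls)) e" for b
    proof -
      from b(4) P ls have g: "?ge (\<psi> x b) (Inr (idx gs (TT x y))) e" by simp
      have TG: "TT x y \<in> Gens" using TT_Gens[OF P(2,5,3,8,6)] .
      from g have "e \<cdot> (gs ! idx gs (TT x y)) = \<psi> x b" unfolding gedge_def by simp
      then have "e \<cdot> TT x y = \<psi> x b" using ix[OF TG] by simp
      moreover have "e \<cdot> TT x y = TT x y" using TT_G[OF P(2,3,8,6)] unfolding Ge_def by blast
      ultimately have "\<psi> x (\<sigma> y) = \<psi> x b" unfolding TT_def by simp
      moreover have "Lc (\<sigma> y) = Lc b" using P(7) b(3) by simp
      ultimately have "\<sigma> y = b" using \<psi>_inj[OF P(2,3,8) b(2) P(6) b(1)] by blast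
      moreover have "map snd (ab # ls) = [] @ [Inr y]" using P(9) ls by simp
      ultimately show ?thesis using P(5) by (intro exI[of _ "[]"] exI[of _ y]) simp
    qed
    then show ?thesis using P ls by auto
  qed
qed

definition edgenz where "edgenz b l b' \<longleftrightarrow> edge b l b' \<and> b' \<noteq> z"

lemma Rnz_complete:
  assumes gs: "set gs = Gens"
  shows "run edgenz b w c \<Longrightarrow> c = \<sigma> y \<Longrightarrow> y \<in> X \<Longrightarrow> x \<in> X \<Longrightarrow> \<sigma> x \<noteq> z \<Longrightarrow> b \<noteq> z \<Longrightarrow> Rin x b \<Longrightarrow>
    \<exists>ls. run (Rnz gs) (Q (x, Lc b)) ls Fi \<and> map snd ls = w @ [Inr y] \<and>
      run (oedge (Ge e) f {..<length gs} (\<lambda>i. gs ! i)) (Some (\<psi> x b)) (map fst ls) None"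
proof (induction b w c rule: run.induct)
  case (run_nil b)
  have ix: "gs ! idx gs (TT x y) = TT x y" "idx gs (TT x y) < length gs"
    using idx[of "TT x y" gs] gs TT_Gens[of x y] run_nil by auto
  have R: "Rnz gs (Q (x, Lc b)) (Inr (idx gs (TT x y)), Inr y) Fi"
    unfolding Rnz_def using run_nil Lc_in[of b] Rin_S by auto
  have G: "\<psi> x (\<sigma> y) \<in> Ge e" using \<psi>_G run_nil by simp
  have O: "oedge (Ge e) f {..<length gs} (\<lambda>i. gs ! i) (Some (\<psi> x b)) (Inr (idx gs (TT x y))) None"
    unfolding oedge_def vertices1_def using ix G run_nil unfolding TT_def by auto
  show ?case using R O by (intro exI[of _ "[(Inr (idx gs (TT x y)), Inr y)]"]) auto
next
  case (run_cons b l b' w c)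
  have E: "edge b l b'" "b' \<noteq> z" using run_cons(1) unfolding edgenz_def by auto
  have bS: "b \<in> S" "b' \<in> S" using edge_S[OF E(1)] by auto
  show ?case
  proof (cases l)
    case (Inl x')
    then have x': "x' \<in> X" "b' = b \<cdot> \<sigma> x'" using E unfolding edge_def by auto
    have Rb': "Rin x b'" using Rin_fwd run_cons x' by simp
    obtain ls where ls: "run (Rnz gs) (Q (x, Lc b')) ls Fi" "map snd ls = w @ [Inr y]"
      "run (oedge (Ge e) f {..<length gs} (\<lambda>i. gs ! i)) (Some (\<psi> x b')) (map fst ls) None"
      using run_cons(3)[OF run_cons(4,5,6,7) E(2) Rb'] by blast
    have lc: "Lc b \<in> \<Lambda>" using Lc_in bS run_cons by simp
    have nz: "qq (Lc b) \<cdot> \<sigma> x' \<noteq> z" using zero_cond[of b "\<sigma> x'"] bS x' E run_cons by simp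
    have L: "Lc b' = Lc (\<sigma> x')" using Lc_mult[of b "\<sigma> x'"] bS x' E by simp
    have R: "Rnz gs (Q (x, Lc b)) (Inl (idx gs (gg (Lc b) x')), Inl x') (Q (x, Lc b'))"
      unfolding Rnz_def using run_cons lc x' nz L by auto
    have ix: "gs ! idx gs (gg (Lc b) x') = gg (Lc b) x'" "idx gs (gg (Lc b) x') < length gs"
      using idx[of "gg (Lc b) x'" gs] gs gg_Gens[OF lc x'(1) nz] by auto
    have psi: "\<psi> x b' = \<psi> x b \<cdot> gg (Lc b) x'" using \<psi>_fwd[of x b x'] run_cons bS x' E by simp
    have O: "oedge (Ge e) f {..<length gs} (\<lambda>i. gs ! i) (Some (\<psi> x b)) (Inl (idx gs (gg (Lc b) x'))) (Some (\<psi> x b'))"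
      unfolding oedge_def vertices1_def using ix psi \<psi>_G[of x b] \<psi>_G[of x b'] run_cons Rb' E by auto
    show ?thesis using R O ls Inl by (intro exI[of _ "(Inl (idx gs (gg (Lc b) x')), Inl x') # ls"]) auto
  next
    case (Inr x')
    then have x': "x' \<in> X" "b' \<cdot> \<sigma> x' = b" using E unfolding edge_def by auto
    have Rb': "Rin x b'" using Rin_bwd[of x b' x' b] run_cons x' bS by simp
    obtain ls where ls: "run (Rnz gs) (Q (x, Lc b')) ls Fi" "map snd ls = w @ [Inr y]"
      "run (oedge (Ge e) f {..<length gs} (\<lambda>i. gs ! i)) (Some (\<psi> x b')) (map fst ls) None"
      using run_cons(3)[OF run_cons(4,5,6,7) E(2) Rb'] by blast
    have sz: "\<sigma> x' \<noteq> z" using nzr[of b' "\<sigma> x'"] bS x' run_cons by simp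
    have lc: "Lc b \<in> \<Lambda>" "Lc b' \<in> \<Lambda>" using Lc_in bS run_cons E by auto
    have nz: "qq (Lc b') \<cdot> \<sigma> x' \<noteq> z" using zero_cond[of b' "\<sigma> x'"] bS x' E run_cons by simp
    have L: "Lc b = Lc (\<sigma> x')" using Lc_mult[of b' "\<sigma> x'"] bS x' run_cons by simp
    have R: "Rnz gs (Q (x, Lc b)) (Inr (idx gs (gg (Lc b') x')), Inr x') (Q (x, Lc b'))"
      unfolding Rnz_def using run_cons lc x' nz L sz by auto
    have ix: "gs ! idx gs (gg (Lc b') x') = gg (Lc b') x'" "idx gs (gg (Lc b') x') < length gs"
      using idx[of "gg (Lc b') x'" gs] gs gg_Gens[OF lc(2) x'(1) nz] by auto
    have psi: "\<psi> x b = \<psi> x b' \<cdot> gg (Lc b') x'" using \<psi>_fwd[of x b' x'] run_cons bS x' E by simp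
    have O: "oedge (Ge e) f {..<length gs} (\<lambda>i. gs ! i) (Some (\<psi> x b)) (Inr (idx gs (gg (Lc b') x'))) (Some (\<psi> x b'))"
      unfolding oedge_def vertices1_def using ix psi \<psi>_G[of x b] \<psi>_G[of x b'] run_cons Rb' E by auto
    show ?thesis using R O ls Inr by (intro exI[of _ "(Inr (idx gs (gg (Lc b') x')), Inr x') # ls"]) auto
  qed
qed

end

context czsg begin

lemma nz_split: "run edge b w c \<Longrightarrow> b \<in> S \<Longrightarrow>
   (b \<noteq> z \<and> run edgenz b w c) \<or> (\<exists>w1 w2. w = w1 @ w2 \<and> run edge b w1 z \<and> run edge z w2 c)"
proof (induction b w c rule: run.induct)
  case (run_nil s) then show ?case by (cases "s = z") auto
next
  case (run_cons b l b' w c)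
  have b'S: "b' \<in> S" using edge_S[OF run_cons(1)] by simp
  show ?case
  proof (cases "b = z")
    case True
    then show ?thesis using run_cons(1,2) by (intro disjI2 exI[of _ "[]"] exI[of _ "l # w"]) auto
  next
    case False
    from run_cons(3)[OF b'S] show ?thesis
    proof
      assume "b' \<noteq> z \<and> run edgenz b' w c"
      then show ?thesis using False run_cons(1) unfolding edgenz_def by auto
    next
      assume "\<exists>w1 w2. w = w1 @ w2 \<and> run edge b' w1 z \<and> run edge z w2 c"
      then obtain w1 w2 where "w = w1 @ w2" "run edge b' w1 z" "run edge z w2 c" by blast
      then show ?thesis using run_cons(1) by (intro disjI2 exI[of _ "l # w1"] exI[of _ w2]) auto
    qed
  qed
qed

lemma Ge_closed: "\<forall>a\<in>Ge e. \<forall>b\<in>Ge e. a \<cdot> b \<in> Ge e"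
  using Ge_mult[OF eS ee ez] by blast

lemma Exc_eq:
  assumes gs: "set gs = Gens"
  shows "Exc = {map snd ls | ls. run (Rnz gs) St ls Fi \<and> map fst ls \<in> loop_problem (Ge e) f {..<length gs} (\<lambda>i. gs ! i)}
              \<union> {w. run Rz St w Fi}"
  (is "Exc = ?A \<union> ?B")
proof
  have tY: "\<forall>j\<in>{..<length gs}. gs ! j \<in> Ge e" using gs Gens_G by auto
  have LPG: "loop_path (Ge e) f {..<length gs} (\<lambda>i. gs ! i) p w q \<longleftrightarrow>
      p \<in> vertices1 (Ge e) \<and> run (oedge (Ge e) f {..<length gs} (\<lambda>i. gs ! i)) p w q" for p w q
    by (rule loop_path_iff[OF tY Ge_closed])
  show "?A \<union> ?B \<subseteq> Exc"
  proof
    fix u assume "u \<in> ?A \<union> ?B"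
    then show "u \<in> Exc"
    proof
      assume "u \<in> ?A"
      then obtain ls where ls: "u = map snd ls" "run (Rnz gs) St ls Fi"
        "map fst ls \<in> loop_problem (Ge e) f {..<length gs} (\<lambda>i. gs ! i)" by blast
      have "run (oedge (Ge e) f {..<length gs} (\<lambda>i. gs ! i)) None (map fst ls) None"
        using ls(3) unfolding loop_problem_def LPG by auto
      from proj[OF tY this] have "run (gedge (\<lambda>i. gs ! i) {..<length gs}) e (map fst ls) e"
        unfolding \<pi>_def by simp
      then show "u \<in> Exc" using Rnz_sound_gen[OF gs ls(2)] ls(1) by blast
    next
      assume "u \<in> ?B" then show "u \<in> Exc" using Rz_sound by blast
    qed
  qed
  show "Exc \<subseteq> ?A \<union> ?B"
  proof
    fix u assume "u \<in> Exc"
    then obtain x y w where u: "u = Inl x # w @ [Inr y]" "x \<in> X" "y \<in> X" "ipath (\<sigma> x) w (\<sigma> y)"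
      unfolding Exc_def by blast
    have "(\<sigma> x \<noteq> z \<and> run edgenz (\<sigma> x) w (\<sigma> y)) \<or> (\<exists>w1 w2. w = w1 @ w2 \<and> run edge (\<sigma> x) w1 z \<and> run edge z w2 (\<sigma> y))"
      using nz_split[of "\<sigma> x" w "\<sigma> y"] u(4) unfolding ipath_def by blast
    then show "u \<in> ?A \<union> ?B"
    proof (elim disjE conjE exE)
      assume nz: "\<sigma> x \<noteq> z" and r: "run edgenz (\<sigma> x) w (\<sigma> y)"
      have Rx: "Rin x (\<sigma> x)" unfolding Rin_def by simp
      obtain ls where ls: "run (Rnz gs) (Q (x, Lc (\<sigma> x))) ls Fi" "map snd ls = w @ [Inr y]"
        "run (oedge (Ge e) f {..<length gs} (\<lambda>i. gs ! i)) (Some (\<psi> x (\<sigma> x))) (map fst ls) None"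
        using Rnz_complete[OF gs r refl u(3) u(2) nz nz Rx] by blast
      have ix: "gs ! idx gs (tt x) = tt x" "idx gs (tt x) < length gs"
        using idx[of "tt x" gs] gs tt_Gens[OF u(2) nz] by auto
      have R: "Rnz gs St (Inl (idx gs (tt x)), Inl x) (Q (x, Lc (\<sigma> x)))" unfolding Rnz_def using u nz by auto
      have O: "oedge (Ge e) f {..<length gs} (\<lambda>i. gs ! i) None (Inl (idx gs (tt x))) (Some (\<psi> x (\<sigma> x)))"
        unfolding oedge_def vertices1_def using ix tt_G[OF u(2) nz] unfolding tt_def by auto
      let ?ls = "(Inl (idx gs (tt x)), Inl x) # ls"
      have "map fst ?ls \<in> loop_problem (Ge e) f {..<length gs} (\<lambda>i. gs ! i)"
        unfolding loop_problem_def LPG vertices1_def using O ls(3) by auto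
      moreover have "run (Rnz gs) St ?ls Fi" using R ls(1) by auto
      moreover have "u = map snd ?ls" using u ls(2) by simp
      ultimately show ?thesis by blast
    next
      fix w1 w2 assume "w = w1 @ w2" "run edge (\<sigma> x) w1 z" "run edge z w2 (\<sigma> y)"
      then have "run Rz St u Fi" using Rz_complete[OF u(2,3)] u(1) by simp
      then show ?thesis by blast
    qed
  qed
qed

theorem dir21:
  assumes rt: "closed_rat_trans F" and un: "closed_union F" and st: "closed_star F"
    and H: "has_loop_problem_in F (Ge e) f"
  shows "map enc_letter ` loop_problem S f X \<sigma> \<in> F"
proof -
  obtain gs where gs: "set gs = Gens" using finGens finite_list by blast
  have fg: "finite_generators (Ge e) f {..<length gs} (\<lambda>i. gs ! i)"
  proof (rule fg_from_list)
    show "set gs \<subseteq> Ge e" using gs Gens_G by simp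
    show "\<forall>h\<in>Ge e. \<exists>l. l \<noteq> [] \<and> set l \<subseteq> set gs \<and> prodl f l = h"
      using schreier gs unfolding Gens_def by blast
  qed
  define LH where "LH = loop_problem (Ge e) f {..<length gs} (\<lambda>i. gs ! i)"
  have LHF: "map enc_letter ` LH \<in> F" using H fg unfolding has_loop_problem_in_def LH_def by blast
  have nil: "[] \<in> LH" unfolding LH_def loop_problem_def by (simp add: lp_nil vertices1_def)
  have E1: "{map enc_letter (map snd ls) | ls. run (Rnz gs) St ls Fi \<and> map enc_letter (map fst ls) \<in> map enc_letter ` LH} \<in> F"
    by (rule G1[OF Rnz_fin LHF rt])
  have E2: "{map enc_letter w | w. run Rz St w Fi} \<in> F"
    by (rule G2[OF Rz_fin LHF _ rt]) (use nil in auto)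
  have eq1: "{map enc_letter (map snd ls) | ls. run (Rnz gs) St ls Fi \<and> map enc_letter (map fst ls) \<in> map enc_letter ` LH}
      = map enc_letter ` {map snd ls | ls. run (Rnz gs) St ls Fi \<and> map fst ls \<in> LH}"
  proof -
    have mem: "map enc_letter l \<in> map enc_letter ` LH \<longleftrightarrow> l \<in> LH" for l
      using inj_map_enc by (rule inj_image_mem_iff)
    show ?thesis unfolding mem by blast
  qed
  have eq2: "{map enc_letter w | w. run Rz St w Fi} = map enc_letter ` {w. run Rz St w Fi}" by auto
  have ex: "Exc = {map snd ls | ls. run (Rnz gs) St ls Fi \<and> map fst ls \<in> LH} \<union> {w. run Rz St w Fi}"
    using Exc_eq[OF gs] unfolding LH_def .
  have "map enc_letter ` loop_problem S f X \<sigma> = kleene_star (map enc_letter ` Exc)"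
    unfolding LS_star map_kleene_star ..
  also have "\<dots> = kleene_star ({map enc_letter (map snd ls) | ls. run (Rnz gs) St ls Fi \<and> map enc_letter (map fst ls) \<in> map enc_letter ` LH}
        \<union> {map enc_letter w | w. run Rz St w Fi})"
    unfolding eq1 eq2 ex image_Un ..
  finally show ?thesis using E1 E2 un st unfolding closed_union_def closed_star_def by simp
qed

end

lemma run_restrict: "run R s w t \<Longrightarrow> set w \<subseteq> A \<Longrightarrow> run (\<lambda>a l b. R a l b \<and> l \<in> A) s w t"
  by (induction rule: run.induct) auto

lemma run_mono: "run R s w t \<Longrightarrow> (\<And>a l b. R a l b \<Longrightarrow> R' a l b) \<Longrightarrow> run R' s w t"
  by (induction rule: run.induct) auto

lemma run_letters: "run R s w t \<Longrightarrow> (\<And>a l b. R a l b \<Longrightarrow> l \<in> A) \<Longrightarrow> set w \<subseteq> A"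
  by (induction rule: run.induct) auto

definition Rf :: "nat set \<Rightarrow> unit \<Rightarrow> (nat + nat) \<times> (nat + nat) \<Rightarrow> unit \<Rightarrow> bool" where
  "Rf Y p ab p' \<longleftrightarrow> fst ab = snd ab \<and> fst ab \<in> Inl ` Y \<union> Inr ` Y"

lemma Rf_run: "run (Rf Y) () ls () \<longleftrightarrow> map snd ls = map fst ls \<and> set (map fst ls) \<subseteq> Inl ` Y \<union> Inr ` Y"
  by (induction ls) (auto simp: Rf_def)

lemma Rf_fin: assumes "finite Y" shows "finite {(p, a, b, p'). Rf Y p (a, b) p'}"
proof -
  have "{(p, a, b, p'). Rf Y p (a, b) p'} \<subseteq> (UNIV :: unit set) \<times> (Inl ` Y \<union> Inr ` Y) \<times> (Inl ` Y \<union> Inr ` Y) \<times> (UNIV :: unit set)"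
    unfolding Rf_def by auto
  moreover have "finite ((UNIV :: unit set) \<times> (Inl ` Y \<union> Inr ` Y) \<times> (Inl ` Y \<union> Inr ` Y) \<times> (UNIV :: unit set))"
    using assms by simp
  ultimately show ?thesis by (rule finite_subset)
qed

context czs begin

lemma dir13_lang:
  assumes e: "e \<in> S" "e \<cdot> e = e" "e \<noteq> z"
    and gH: "finite_generators (Ge e) f Y \<tau>"
    and gS: "finite_generators S f X \<sigma>"
    and XY: "Y \<subseteq> X" and st: "\<forall>j\<in>Y. \<sigma> j = \<tau> j"
  shows "loop_problem (Ge e) f Y \<tau> = {w \<in> loop_problem S f X \<sigma>. set w \<subseteq> Inl ` Y \<union> Inr ` Y}"
proof -
  have tG: "\<forall>j\<in>Y. \<tau> j \<in> Ge e" using gH unfolding finite_generators_def by blast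
  have sS: "\<forall>x\<in>X. \<sigma> x \<in> S" using gS unfolding finite_generators_def by blast
  have GS: "Ge e \<subseteq> S" unfolding Ge_def by auto
  have clS: "\<forall>a\<in>S. \<forall>b\<in>S. a \<cdot> b \<in> S" by auto
  have clG: "\<forall>a\<in>Ge e. \<forall>b\<in>Ge e. a \<cdot> b \<in> Ge e" using Ge_mult[OF e] by blast
  note LPS = loop_path_iff[OF sS clS]
  note LPG = loop_path_iff[OF tG clG]
  have V: "vertices1 (Ge e) \<subseteq> vertices1 S" using GS unfolding vertices1_def by auto
  let ?Y = "Inl ` Y \<union> Inr ` Y"
  show ?thesis
  proof (intro set_eqI iffI)
    fix w assume "w \<in> loop_problem (Ge e) f Y \<tau>"
    then have r: "run (oedge (Ge e) f Y \<tau>) None w None" unfolding loop_problem_def LPG by auto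
    have "run (oedge S f X \<sigma>) None w None"
    proof (rule run_mono[OF r])
      fix a l b assume "oedge (Ge e) f Y \<tau> a l b"
      then show "oedge S f X \<sigma> a l b" unfolding oedge_def using V XY st by (cases l) auto
    qed
    moreover have "set w \<subseteq> ?Y" using run_letters[OF r] unfolding oedge_def by (auto split: sum.splits)
    ultimately show "w \<in> {w \<in> loop_problem S f X \<sigma>. set w \<subseteq> ?Y}"
      unfolding loop_problem_def LPS vertices1_def by auto
  next
    fix w assume "w \<in> {w \<in> loop_problem S f X \<sigma>. set w \<subseteq> ?Y}"
    then have r: "run (oedge S f X \<sigma>) None w None" "set w \<subseteq> ?Y" unfolding loop_problem_def LPS by auto
    define inv where "inv p = (case p of None \<Rightarrow> True | Some b \<Rightarrow> b \<in> S \<and> e \<cdot> b = b \<and> b \<cdot> e \<noteq> z)" for p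
    define \<phi> where "\<phi> p = (case p of None \<Rightarrow> None | Some b \<Rightarrow> Some (b \<cdot> e))" for p
    have step: "\<exists>q'. oedge (Ge e) f Y \<tau> p' l q' \<and> inv q \<and> q' = \<phi> q"
      if E: "oedge S f X \<sigma> p l q \<and> l \<in> ?Y" and P: "inv p \<and> p' = \<phi> p" for p l q p'
    proof (cases l)
      case (Inl j)
      then have j: "j \<in> Y" "q = act1 f p (\<tau> j)" using E st unfolding oedge_def by auto
      have tj: "\<tau> j \<in> S" "\<tau> j \<noteq> z" "e \<cdot> \<tau> j = \<tau> j" "\<tau> j \<cdot> e = \<tau> j" "\<tau> j \<in> Ge e"
        using tG j unfolding Ge_def by auto
      show ?thesis
      proof (cases p)
        case None
        then show ?thesis using j tj P Inl unfolding oedge_def vertices1_def inv_def \<phi>_def by auto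
      next
        case (Some b)
        then have b: "b \<in> S" "e \<cdot> b = b" "b \<cdot> e \<noteq> z" using P unfolding inv_def by auto
        have "e \<cdot> (b \<cdot> e) = b \<cdot> e" using b e as[of e b e] by simp
        moreover have "b \<cdot> e \<cdot> e = b \<cdot> e" using b e as[of b e e] by simp
        ultimately have beG: "b \<cdot> e \<in> Ge e" unfolding Ge_def using b e by auto
        have prod: "(b \<cdot> e) \<cdot> \<tau> j \<in> Ge e" using Ge_mult[OF e beG tj(5)] .
        have eq: "b \<cdot> \<tau> j = (b \<cdot> e) \<cdot> \<tau> j" using b(1) e(1) tj(1,3) as[of b e "\<tau> j"] by simp
        have eq2: "b \<cdot> \<tau> j \<cdot> e = b \<cdot> \<tau> j" using b(1) e(1) tj(1,4) as[of b "\<tau> j" e] by simp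
        have "e \<cdot> (b \<cdot> \<tau> j) = b \<cdot> \<tau> j" using b tj e as[of e b "\<tau> j"] by simp
        moreover have "b \<cdot> \<tau> j \<cdot> e \<noteq> z" using eq2 eq prod unfolding Ge_def by simp
        ultimately have inv: "inv q" using j Some b tj unfolding inv_def by simp
        show ?thesis using j Some P prod beG inv Inl eq eq2 unfolding oedge_def vertices1_def \<phi>_def by auto
      qed
    next
      case (Inr j)
      then have j: "j \<in> Y" "act1 f q (\<tau> j) = p" "q \<in> vertices1 S" using E st unfolding oedge_def by auto
      have tj: "\<tau> j \<in> S" "\<tau> j \<noteq> z" "e \<cdot> \<tau> j = \<tau> j" "\<tau> j \<cdot> e = \<tau> j" "\<tau> j \<in> Ge e"
        using tG j unfolding Ge_def by auto
      show ?thesis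
      proof (cases q)
        case None
        then have "p = Some (\<tau> j)" using j by simp
        then show ?thesis using j tj P Inr None unfolding oedge_def vertices1_def inv_def \<phi>_def by auto
      next
        case (Some b')
        then have b'S: "b' \<in> S" "p = Some (b' \<cdot> \<tau> j)" using j unfolding vertices1_def by auto
        have I: "e \<cdot> (b' \<cdot> \<tau> j) = b' \<cdot> \<tau> j" "b' \<cdot> \<tau> j \<cdot> e \<noteq> z" using P b'S unfolding inv_def by auto
        have nz: "b' \<cdot> \<tau> j \<noteq> z" using nzl[of "b' \<cdot> \<tau> j" e] I(2) e b'S tj by simp
        obtain t where t: "t \<in> S" "b' = b' \<cdot> \<tau> j \<cdot> t" using F1[OF b'S(1) tj(1) nz] by blast
        have eb': "e \<cdot> b' = b'"
        proof -
          have "e \<cdot> b' = e \<cdot> (b' \<cdot> \<tau> j \<cdot> t)" using t(2) by metis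
          also have "\<dots> = e \<cdot> (b' \<cdot> \<tau> j) \<cdot> t" using t(1) e(1) b'S(1) tj(1) by (simp add: as)
          also have "\<dots> = b'" using I(1) t by simp
          finally show ?thesis .
        qed
        have eq: "b' \<cdot> \<tau> j = (b' \<cdot> e) \<cdot> \<tau> j" using b'S(1) e(1) tj(1,3) as[of b' e "\<tau> j"] by simp
        have b'e: "b' \<cdot> e \<noteq> z"
        proof
          assume "b' \<cdot> e = z" then have "b' \<cdot> \<tau> j = z" using eq tj by simp
          then show False using nz by simp
        qed
        have "e \<cdot> (b' \<cdot> e) = b' \<cdot> e" using b'S e eb' as[of e b' e] by simp
        moreover have "b' \<cdot> e \<cdot> e = b' \<cdot> e" using b'S e as[of b' e e] by simp
        ultimately have beG: "b' \<cdot> e \<in> Ge e" unfolding Ge_def using b'S e b'e by auto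
        have inv: "inv q" using Some b'S eb' b'e unfolding inv_def by simp
        have eq2: "b' \<cdot> \<tau> j \<cdot> e = b' \<cdot> \<tau> j" using b'S(1) e(1) tj(1,4) as[of b' "\<tau> j" e] by simp
        have pG: "(b' \<cdot> e) \<cdot> \<tau> j \<in> Ge e" using Ge_mult[OF e beG tj(5)] .
        show ?thesis using j Some P b'S beG inv Inr eq eq2 pG unfolding oedge_def vertices1_def \<phi>_def by auto
      qed
    qed
    have "\<exists>s'. run (oedge (Ge e) f Y \<tau>) (\<phi> None) w s' \<and> (inv None \<and> s' = \<phi> None)"
      by (rule run_sim[OF run_restrict[OF r(1) r(2)], of "\<lambda>p p'. inv p \<and> p' = \<phi> p"])
         (use step in \<open>auto simp: inv_def\<close>)
    then have "run (oedge (Ge e) f Y \<tau>) None w None" unfolding \<phi>_def by simp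
    then show "w \<in> loop_problem (Ge e) f Y \<tau>" unfolding loop_problem_def LPG vertices1_def by auto
  qed
qed

end

context czs begin

lemma dir21_all:
  assumes rt: "closed_rat_trans F" and un: "closed_union F" and st: "closed_star F"
    and fg: "fin_generated S f"
    and H: "nonzero_max_subgroup S f z H" "has_loop_problem_in F H f"
  shows "has_loop_problem_in F S f"
proof -
  obtain e where e: "e \<in> S" "e \<cdot> e = e" "e \<noteq> z" "H = Ge e" using max_is_Ge[OF H(1)] by blast
  have "map enc_letter ` loop_problem S f X \<sigma> \<in> F" if g: "finite_generators S f X \<sigma>" for X \<sigma>
  proof -
    interpret G: czsg S f z X \<sigma> e using g e by unfold_locales auto
    show ?thesis using G.dir21[OF rt un st] H(2) e(4) by simp
  qed
  then show ?thesis unfolding has_loop_problem_in_def using fg by blast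
qed

lemma dir13_all:
  assumes rt: "closed_rat_trans F"
    and S1: "has_loop_problem_in F S f"
    and H: "nonzero_max_subgroup S f z H"
  shows "has_loop_problem_in F H f"
proof -
  obtain e where e: "e \<in> S" "e \<cdot> e = e" "e \<noteq> z" "H = Ge e" using max_is_Ge[OF H] by blast
  obtain X \<sigma> where gS: "finite_generators S f X \<sigma>" using S1 unfolding has_loop_problem_in_def fin_generated_def by blast
  interpret G: czsg S f z X \<sigma> e using gS e by unfold_locales auto
  have fgH: "fin_generated H f" using G.Ge_fg e(4) by simp
  have "map enc_letter ` loop_problem (Ge e) f Y \<tau> \<in> F" if gH: "finite_generators (Ge e) f Y \<tau>" for Y \<tau>
  proof -
    have finY: "finite Y" and tG: "\<forall>j\<in>Y. \<tau> j \<in> Ge e" using gH unfolding finite_generators_def by auto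
    define m where "m = Suc (Max (insert 0 Y))"
    have ym: "y < m" if "y \<in> Y" for y using that finY unfolding m_def by (simp add: le_imp_less_Suc)
    define X' where "X' = Y \<union> (\<lambda>x. x + m) ` X"
    define \<sigma>' where "\<sigma>' n = (if n \<in> Y then \<tau> n else \<sigma> (n - m))" for n
    have nY: "x + m \<notin> Y" for x using ym[of "x + m"] by auto
    have sh: "\<sigma>' (x + m) = \<sigma> x" for x unfolding \<sigma>'_def using nY by simp
    have gS': "finite_generators S f X' \<sigma>'" unfolding finite_generators_def
    proof (intro conjI ballI)
      show "finite X'" unfolding X'_def using finY G.finX by simp
    next
      fix x assume "x \<in> X'"
      then show "\<sigma>' x \<in> S" unfolding X'_def using tG sh unfolding Ge_def \<sigma>'_def by auto
    next
      fix s assume "s \<in> S"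
      then obtain w where w: "w \<noteq> []" "set w \<subseteq> X" "word_val f \<sigma> w = s" using G.surj by blast
      have mm: "map \<sigma>' (map (\<lambda>x. x + m) w) = map \<sigma> w" using sh by simp
      have "word_val f \<sigma>' (map (\<lambda>x. x + m) w) = prodl f (map \<sigma>' (map (\<lambda>x. x + m) w))" by (rule wv_prodl)
      also have "\<dots> = s" unfolding mm using w(3) by (simp add: wv_prodl)
      finally have "word_val f \<sigma>' (map (\<lambda>x. x + m) w) = s" .
      moreover have "set (map (\<lambda>x. x + m) w) \<subseteq> X'" using w(2) unfolding X'_def by auto
      ultimately show "\<exists>w. w \<noteq> [] \<and> set w \<subseteq> X' \<and> word_val f \<sigma>' w = s" using w(1)
        by (intro exI[of _ "map (\<lambda>x. x + m) w"]) auto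
    qed
    have LF: "map enc_letter ` loop_problem S f X' \<sigma>' \<in> F" using S1 gS' unfolding has_loop_problem_in_def by blast
    have eq: "loop_problem (Ge e) f Y \<tau> = {w \<in> loop_problem S f X' \<sigma>'. set w \<subseteq> Inl ` Y \<union> Inr ` Y}"
      by (rule dir13_lang[OF e(1,2,3) gH gS']) (auto simp: X'_def \<sigma>'_def)
    have img: "{map enc_letter (map snd ls) | ls. run (Rf Y) () ls () \<and> map enc_letter (map fst ls) \<in> map enc_letter ` loop_problem S f X' \<sigma>'} \<in> F"
      by (rule G1[OF Rf_fin[OF finY] LF rt])
    have mem: "map enc_letter l \<in> map enc_letter ` L \<longleftrightarrow> l \<in> L" for l L
      using inj_map_enc by (rule inj_image_mem_iff)
    have "{map enc_letter (map snd ls) | ls. run (Rf Y) () ls () \<and> map enc_letter (map fst ls) \<in> map enc_letter ` loop_problem S f X' \<sigma>'}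
        = map enc_letter ` loop_problem (Ge e) f Y \<tau>"
    proof (intro set_eqI iffI)
      fix v assume "v \<in> {map enc_letter (map snd ls) | ls. run (Rf Y) () ls () \<and> map enc_letter (map fst ls) \<in> map enc_letter ` loop_problem S f X' \<sigma>'}"
      then obtain ls where ls: "v = map enc_letter (map snd ls)" "run (Rf Y) () ls ()" "map fst ls \<in> loop_problem S f X' \<sigma>'"
        unfolding mem by blast
      then have "map snd ls = map fst ls" "set (map fst ls) \<subseteq> Inl ` Y \<union> Inr ` Y" unfolding Rf_run by auto
      then have "map fst ls \<in> loop_problem (Ge e) f Y \<tau>" unfolding eq using ls(3) by blast
      moreover have "v = map enc_letter (map fst ls)" using ls(1) \<open>map snd ls = map fst ls\<close> by simp
      ultimately show "v \<in> map enc_letter ` loop_problem (Ge e) f Y \<tau>" by blast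
    next
      fix v assume "v \<in> map enc_letter ` loop_problem (Ge e) f Y \<tau>"
      then obtain w where w: "v = map enc_letter w" "w \<in> loop_problem S f X' \<sigma>'" "set w \<subseteq> Inl ` Y \<union> Inr ` Y"
        unfolding eq by blast
      let ?ls = "map (\<lambda>a. (a, a)) w"
      have "map fst ?ls = w" "map snd ?ls = w" by (induction w) auto
      then show "v \<in> {map enc_letter (map snd ls) | ls. run (Rf Y) () ls () \<and> map enc_letter (map fst ls) \<in> map enc_letter ` loop_problem S f X' \<sigma>'}"
        using w unfolding mem Rf_run by (intro CollectI exI[of _ ?ls]) auto
    qed
    then show ?thesis using img by simp
  qed
  then show ?thesis unfolding has_loop_problem_in_def using fgH e(4) by simp
qed

end

theorem theorem6p1:
  fixes F :: "nat list set set" and S :: "'a set" and f :: "'a \<Rightarrow> 'a \<Rightarrow> 'a" and z :: 'a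
  assumes "language_family F"
    and "closed_union F" and "closed_rat_trans F" and "closed_product F" and "closed_star F"
    and "completely_zero_simple S f z" and "fin_generated S f"
  shows "(has_loop_problem_in F S f \<longleftrightarrow>
            (\<exists>H. nonzero_max_subgroup S f z H \<and> has_loop_problem_in F H f))
       \<and> (has_loop_problem_in F S f \<longleftrightarrow>
            (\<forall>H. nonzero_max_subgroup S f z H \<longrightarrow> has_loop_problem_in F H f))"
proof -
  interpret czs S f z using assms(6) by unfold_locales
  have ex: "nonzero_max_subgroup S f z (Ge e0)" using Ge_max[OF e0S e0e e0z] .
  have A: "has_loop_problem_in F S f" if "nonzero_max_subgroup S f z H" "has_loop_problem_in F H f" for H
    using dir21_all[OF assms(3,2,5,7) that] .
  have B: "has_loop_problem_in F H f" if "has_loop_problem_in F S f" "nonzero_max_subgroup S f z H" for H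
    using dir13_all[OF assms(3) that] .
  show ?thesis using A B ex by blast
qed

end
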